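(* Let $\lambda>0$ and consider the type II AWGN wiretap channel AWGN-WT($\lambda$). Let $\{\mathcal{C}(n)\}$ be either the Tornado LDPC code sequence or the right-regular LDPC code sequence (capacity-achieving for binary erasure channels), let $\mathcal{C}_0(n)=\{0,1\}^n$ and $\mathcal{C}_1(n)=\mathcal{C}^{\perp}(n)$. Then, using the secure nested code sequence $\{\mathcal{C}_0(n),\mathcal{C}_1(n)\}$ over AWGN-WT($\lambda$), perfect secrecy can be achieved at (and below) the transmission rate $2Q(\sqrt{2\lambda})$, where $Q(x)=\int_x^\infty\frac{1}{\sqrt{2\pi}}e^{-z^2/2}\,dz$; i.e., $(R,R_e)=(R,R)$ is achievable for every $R\le 2Q(\sqrt{2\lambda})$.
   Context: Type II AWGN wiretap channel AWGN-WT($\lambda$): binary input (mapped to $\pm1$), noiseless main channel, eavesdropper channel memoryless binary-input AWGN with output densities $g(z|X=1)=\frac{1}{\sqrt{2\pi}}\exp[-(z+\sqrt{2\lambda})^2/2]$, $g(z|X=-1)=\frac{1}{\sqrt{2\pi}}\exp[-(z-\sqrt{2\lambda})^2/2]$. The Tornado and right-regular sequences (Oswald–Shokrollahi) are LDPC code sequences which, for the chosen rate $R_c\in(0,1)$, have erasure rate threshold $\delta^\star=1-R_c$ over binary erasure channels (the erasure rate threshold being the largest erasure probability at which word error probability tends to zero as $n\to\infty$). Dual code: $\mathcal{C}^\perp(n)=\{\mathbf{x}\in\{0,1\}^n:\mathbf{x}\cdot\mathbf{y}=0\ \forall\mathbf{y}\in\mathcal{C}(n)\}$. Secure nested code: cosets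 of $\mathcal{C}_1(n)$ in $\mathcal{C}_0(n)$ index the uniform messages $W$; a message is sent as a uniformly random codeword of its coset; information rate $R_0-R_1$. A pair $(R,R_e)$ is achievable if there is a rate-$R$ code sequence with legitimate-receiver error probability tending to $0$ and $R_e\le\lim_{n\to\infty}H(W|\mathbf{Z})/n$ ($\mathbf{Z}$ the eavesdropper output); perfect secrecy at rate $R$ means $(R,R)$ is achievable. *)

theory Defs
  imports "HOL-Probability.Probability"
begin

text \<open>A binary vector of length n is a function nat => bool vanishing outside {..<n}
  (True = bit 1, False = bit 0).\<close>

definition vecs :: "nat \<Rightarrow> (nat \<Rightarrow> bool) set" where
  "vecs n = {x. \<forall>i\<ge>n. \<not> x i}"

definition vxor :: "(nat \<Rightarrow> bool) \<Rightarrow> (nat \<Rightarrow> bool) \<Rightarrow> (nat \<Rightarrow> bool)" where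
  "vxor x y = (\<lambda>i. x i \<noteq> y i)"

definition linear_code :: "nat \<Rightarrow> (nat \<Rightarrow> bool) set \<Rightarrow> bool" where
  "linear_code n C \<longleftrightarrow> C \<subseteq> vecs n \<and> (\<lambda>_. False) \<in> C \<and> (\<forall>x\<in>C. \<forall>y\<in>C. vxor x y \<in> C)"

definition dot_zero :: "nat \<Rightarrow> (nat \<Rightarrow> bool) \<Rightarrow> (nat \<Rightarrow> bool) \<Rightarrow> bool" where
  "dot_zero n x y \<longleftrightarrow> even (card {i\<in>{..<n}. x i \<and> y i})"

definition dual_code :: "nat \<Rightarrow> (nat \<Rightarrow> bool) set \<Rightarrow> (nat \<Rightarrow> bool) set" where
  "dual_code n C = {x\<in>vecs n. \<forall>y\<in>C. dot_zero n x y}"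

definition code_rate :: "nat \<Rightarrow> (nat \<Rightarrow> bool) set \<Rightarrow> real" where
  "code_rate n C = log 2 (real (card C)) / real n"

text \<open>Uniform codeword, BEC with erasure probability d; erasure pattern E \<subseteq> {..<n}.
  Given the unerased positions, the optimal decoder picks uniformly among the codewords
  consistent with the observation, and errs with probability 1 - 1/(number of consistent
  codewords).\<close>
definition bec_word_error :: "nat \<Rightarrow> (nat \<Rightarrow> bool) set \<Rightarrow> real \<Rightarrow> real" where
  "bec_word_error n C d =
     (\<Sum>E\<in>Pow {..<n}. d ^ card E * (1 - d) ^ (n - card E) *
        ((1 / real (card C)) * (\<Sum>x\<in>C.
           (1 - 1 / real (card {c\<in>C. \<forall>i<n. i \<notin> E \<longrightarrow> c i = x i})))))"

definition erasure_threshold :: "(nat \<Rightarrow> (nat \<Rightarrow> bool) set) \<Rightarrow> real" where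
  "erasure_threshold C =
     Sup {d\<in>{0..1}. (\<lambda>n. bec_word_error n (C n) d) \<longlonglongrightarrow> 0}"

definition Qfun :: "real \<Rightarrow> real" where
  "Qfun x = (\<integral>z. indicator {x..} z * (exp (- z\<^sup>2 / 2) / sqrt (2 * pi)) \<partial>lborel)"

definition g_awgn :: "real \<Rightarrow> bool \<Rightarrow> real \<Rightarrow> real" where
  "g_awgn lam b z =
     (if b then exp (- (z - sqrt (2 * lam))\<^sup>2 / 2) / sqrt (2 * pi)
           else exp (- (z + sqrt (2 * lam))\<^sup>2 / 2) / sqrt (2 * pi))"

definition out_space :: "nat \<Rightarrow> (nat \<Rightarrow> real) measure" where
  "out_space n = PiM {..<n} (\<lambda>_. lborel)"

definition word_density :: "real \<Rightarrow> nat \<Rightarrow> (nat \<Rightarrow> bool) \<Rightarrow> (nat \<Rightarrow> real) \<Rightarrow> real" where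
  "word_density lam n x z = (\<Prod>i<n. g_awgn lam (x i) (z i))"

text \<open>Cosets of C1 in C0; they index the messages W.\<close>
definition cosets :: "(nat \<Rightarrow> bool) set \<Rightarrow> (nat \<Rightarrow> bool) set \<Rightarrow> (nat \<Rightarrow> bool) set set" where
  "cosets C0 C1 = (\<lambda>x. vxor x ` C1) ` C0"

definition msg_density :: "real \<Rightarrow> nat \<Rightarrow> (nat \<Rightarrow> bool) set \<Rightarrow> (nat \<Rightarrow> real) \<Rightarrow> real" where
  "msg_density lam n w z = (1 / real (card w)) * (\<Sum>x\<in>w. word_density lam n x z)"

text \<open>Conditional entropy H(W|Z) in bits, W uniform over the cosets.\<close>
definition equivocation :: "real \<Rightarrow> nat \<Rightarrow> (nat \<Rightarrow> bool) set \<Rightarrow> (nat \<Rightarrow> bool) set \<Rightarrow> real" where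
  "equivocation lam n C0 C1 =
     (let M = real (card (cosets C0 C1));
          pz = (\<lambda>z. (1 / M) * (\<Sum>w\<in>cosets C0 C1. msg_density lam n w z))
      in \<integral>z. (\<Sum>w\<in>cosets C0 C1. (msg_density lam n w z / M) *
               (- log 2 ((msg_density lam n w z / M) / pz z))) \<partial>out_space n)"

definition nested_rate :: "nat \<Rightarrow> (nat \<Rightarrow> bool) set \<Rightarrow> (nat \<Rightarrow> bool) set \<Rightarrow> real" where
  "nested_rate n C0 C1 = code_rate n C0 - code_rate n C1"

text \<open>Legitimate receiver (noiseless main channel): it observes x and decodes the coset
  containing x (if unique, otherwise an arbitrary coset).  Error probability with uniform W.\<close>
definition legit_decode :: "(nat \<Rightarrow> bool) set \<Rightarrow> (nat \<Rightarrow> bool) set \<Rightarrow> (nat \<Rightarrow> bool) \<Rightarrow> (nat \<Rightarrow> bool) set" where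
  "legit_decode C0 C1 x = (SOME w. w \<in> cosets C0 C1 \<and> x \<in> w)"

definition legit_error :: "(nat \<Rightarrow> bool) set \<Rightarrow> (nat \<Rightarrow> bool) set \<Rightarrow> real" where
  "legit_error C0 C1 =
     (1 / real (card (cosets C0 C1))) *
     (\<Sum>w\<in>cosets C0 C1. (1 / real (card w)) *
        (\<Sum>x\<in>w. if legit_decode C0 C1 x = w then 0 else 1))"

definition achievable_nested ::
  "real \<Rightarrow> (nat \<Rightarrow> (nat \<Rightarrow> bool) set) \<Rightarrow> (nat \<Rightarrow> (nat \<Rightarrow> bool) set) \<Rightarrow> real \<Rightarrow> real \<Rightarrow> bool" where
  "achievable_nested lam C0 C1 R Req \<longleftrightarrow>
     (\<lambda>n. nested_rate n (C0 n) (C1 n)) \<longlonglongrightarrow> R \<and>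
     (\<lambda>n. legit_error (C0 n) (C1 n)) \<longlonglongrightarrow> 0 \<and>
     convergent (\<lambda>n. equivocation lam n (C0 n) (C1 n) / real n) \<and>
     Req \<le> lim (\<lambda>n. equivocation lam n (C0 n) (C1 n) / real n)"

end

theory Submission
  imports Defs
begin


definition vecsOn :: "nat set \<Rightarrow> (nat \<Rightarrow> bool) set" where
  "vecsOn S = {x. \<forall>i. i \<notin> S \<longrightarrow> \<not> x i}"

lemma vecs_eq: "vecs n = vecsOn {..<n}"
  unfolding vecs_def vecsOn_def by auto

lemma vecsOn_bij: "bij_betw (\<lambda>x. {i. x i}) (vecsOn S) (Pow S)"
  by (rule bij_betwI[where g="\<lambda>A i. i \<in> A"]) (auto simp: vecsOn_def)

lemma vecsOn_finite: "finite S \<Longrightarrow> finite (vecsOn S)"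
  using vecsOn_bij[of S] bij_betw_finite by blast

lemma vecsOn_card: "finite S \<Longrightarrow> card (vecsOn S) = 2 ^ card S"
  using bij_betw_same_card[OF vecsOn_bij[of S]] by (simp add: card_Pow)

definition cnt :: "nat \<Rightarrow> (nat \<Rightarrow> bool) \<Rightarrow> (nat \<Rightarrow> bool) \<Rightarrow> nat" where
  "cnt n x y = card {i\<in>{..<n}. x i \<and> y i}"

lemma card_filter_sum: "card {i\<in>{..<n::nat}. P i} = (\<Sum>i<n. if P i then 1 else 0)"
  by (subst sum.inter_filter[symmetric]) auto

lemma cnt_xor: "cnt n x (vxor y z) + 2 * cnt n x (\<lambda>i. y i \<and> z i) = cnt n x y + cnt n x z"
proof -
  have "cnt n x (vxor y z) + 2 * cnt n x (\<lambda>i. y i \<and> z i) =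
    (\<Sum>i<n. (if x i \<and> vxor y z i then 1 else 0) + 2 * (if x i \<and> y i \<and> z i then 1 else 0))"
    unfolding cnt_def card_filter_sum by (simp add: sum.distrib sum_distrib_left)
  also have "\<dots> = (\<Sum>i<n. (if x i \<and> y i then 1 else 0) + (if x i \<and> z i then 1 else 0))"
    by (rule sum.cong) (auto simp: vxor_def)
  also have "\<dots> = cnt n x y + cnt n x z"
    unfolding cnt_def card_filter_sum by (simp add: sum.distrib)
  finally show ?thesis .
qed

lemma even_cnt_xor: "even (cnt n x (vxor y z)) \<longleftrightarrow> (even (cnt n x y) \<longleftrightarrow> even (cnt n x z))"
  using cnt_xor[of n x y z] by (metis even_add even_mult_iff even_numeral)

lemma cnt_comm: "cnt n x y = cnt n y x"
  unfolding cnt_def by (metis (lifting) conj_commute)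

definition chi :: "nat \<Rightarrow> (nat \<Rightarrow> bool) \<Rightarrow> (nat \<Rightarrow> bool) \<Rightarrow> real" where
  "chi n x y = (if even (cnt n x y) then 1 else -1)"

lemma chi_xor2: "chi n x (vxor y z) = chi n x y * chi n x z"
  unfolding chi_def using even_cnt_xor[of n x y z] by auto

lemma chi_xor1: "chi n (vxor x x') y = chi n x y * chi n x' y"
  using chi_xor2[of n y x x'] by (simp add: chi_def cnt_comm)

lemma sum_invol_zero:
  fixes g :: "'a \<Rightarrow> real"
  assumes "\<forall>x\<in>A. f x \<in> A" "\<forall>x\<in>A. f (f x) = x" "\<forall>x\<in>A. g (f x) = - g x"
  shows "sum g A = 0"
proof -
  have b: "bij_betw f A A"
    by (rule bij_betwI[where g=f]) (use assms in auto)
  have "sum g A = sum (g \<circ> f) A"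
    using sum.reindex_bij_betw[OF b, of g] by simp
  also have "\<dots> = - sum g A"
    using assms(3) by (simp add: sum_negf[symmetric])
  finally show ?thesis by simp
qed

lemma vxor_self: "vxor (vxor x y) y = x"
  unfolding vxor_def by auto

lemma vxor_cancel: "vxor x (vxor x y) = y"
  unfolding vxor_def by auto

lemma vxor_comm: "vxor x y = vxor y x"
  unfolding vxor_def by auto

lemma vxor_assoc: "vxor (vxor x y) z = vxor x (vxor y z)"
  unfolding vxor_def by auto

lemma vxor_zero[simp]: "vxor x (\<lambda>_. False) = x" "vxor (\<lambda>_. False) x = x"
  unfolding vxor_def by auto

lemma vxor_same[simp]: "vxor x x = (\<lambda>_. False)"
  unfolding vxor_def by auto

lemma vecsOn_xor: "x \<in> vecsOn S \<Longrightarrow> y \<in> vecsOn S \<Longrightarrow> vxor x y \<in> vecsOn S"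
  unfolding vecsOn_def vxor_def by auto

lemma cnt_zero[simp]: "cnt n x (\<lambda>_. False) = 0"
  unfolding cnt_def by simp

lemma ann_card:
  assumes S: "S \<subseteq> {..<n}" and V: "V \<subseteq> vecsOn S" "(\<lambda>_. False) \<in> V"
    "\<forall>x\<in>V. \<forall>y\<in>V. vxor x y \<in> V"
  shows "card {x\<in>vecsOn S. \<forall>y\<in>V. even (cnt n x y)} * card V = 2 ^ card S"
proof -
  have fS: "finite S" using S finite_subset by blast
  have fVS: "finite (vecsOn S)" using vecsOn_finite[OF fS] .
  have fV: "finite V" using V(1) fVS finite_subset by blast
  define A where "A = {x\<in>vecsOn S. \<forall>y\<in>V. even (cnt n x y)}"
  have inner_y: "(\<Sum>x\<in>vecsOn S. chi n x y) = (if y = (\<lambda>_. False) then 2 ^ card S else 0)"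
    if y: "y \<in> V" for y
  proof (cases "y = (\<lambda>_. False)")
    case True
    then show ?thesis by (simp add: chi_def vecsOn_card[OF fS])
  next
    case False
    then obtain j where j: "y j" by auto
    have jS: "j \<in> S" using j y V(1) unfolding vecsOn_def by auto
    hence jn: "j < n" using S by auto
    define e where "e = (\<lambda>i. i = j)"
    have eS: "e \<in> vecsOn S" using jS unfolding e_def vecsOn_def by auto
    have ce: "chi n e y = -1"
    proof -
      have "{i\<in>{..<n}. e i \<and> y i} = {j}" using j jn unfolding e_def by auto
      thus ?thesis unfolding chi_def cnt_def by simp
    qed
    have "(\<Sum>x\<in>vecsOn S. chi n x y) = 0"
      by (rule sum_invol_zero[where f="\<lambda>x. vxor x e"])
        (auto simp: vecsOn_xor eS vxor_self chi_xor1 ce)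
    thus ?thesis using False by simp
  qed
  have inner_x: "(\<Sum>y\<in>V. chi n x y) = (if x \<in> A then card V else 0)"
    if x: "x \<in> vecsOn S" for x
  proof (cases "x \<in> A")
    case True
    hence "\<forall>y\<in>V. chi n x y = 1" unfolding A_def chi_def by auto
    thus ?thesis using True by simp
  next
    case False
    then obtain y0 where y0: "y0 \<in> V" "odd (cnt n x y0)" using x unfolding A_def by auto
    have c0: "chi n x y0 = -1" using y0 unfolding chi_def by simp
    have "(\<Sum>y\<in>V. chi n x y) = 0"
      by (rule sum_invol_zero[where f="\<lambda>y. vxor y y0"])
        (use V(3) y0(1) in \<open>auto simp: vxor_self chi_xor2 c0\<close>)
    thus ?thesis using False by simp
  qed
  have "(\<Sum>x\<in>vecsOn S. \<Sum>y\<in>V. chi n x y) = (\<Sum>x\<in>vecsOn S. if x \<in> A then real (card V) else 0)"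
    by (rule sum.cong) (auto simp: inner_x)
  also have "\<dots> = real (card A) * real (card V)"
  proof -
    have "A \<subseteq> vecsOn S" unfolding A_def by auto
    hence "A = vecsOn S \<inter> A" by auto
    thus ?thesis using fVS by (simp add: sum.If_cases[OF fVS] Int_commute)
  qed
  finally have e1: "(\<Sum>x\<in>vecsOn S. \<Sum>y\<in>V. chi n x y) = real (card A) * real (card V)" .
  have "(\<Sum>x\<in>vecsOn S. \<Sum>y\<in>V. chi n x y) = (\<Sum>y\<in>V. \<Sum>x\<in>vecsOn S. chi n x y)"
    by (rule sum.swap)
  also have "\<dots> = (\<Sum>y\<in>V. if y = (\<lambda>_. False) then 2 ^ card S else 0)"
    by (rule sum.cong) (auto simp: inner_y)
  also have "\<dots> = 2 ^ card S"
    using fV V(2) by (simp add: sum.delta')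
  finally have "real (card A) * real (card V) = 2 ^ card S" using e1 by simp
  hence "real (card A * card V) = real (2 ^ card S)" by simp
  thus ?thesis unfolding A_def by (simp only: of_nat_eq_iff)
qed


lemma dual_eq: "dual_code n C = {x\<in>vecsOn {..<n}. \<forall>y\<in>C. even (cnt n x y)}"
  unfolding dual_code_def dot_zero_def cnt_def vecs_eq by simp

lemma lin_sub: "linear_code n C \<Longrightarrow> C \<subseteq> vecsOn {..<n}"
  unfolding linear_code_def vecs_eq by simp

lemma lin_finite: "linear_code n C \<Longrightarrow> finite C"
  using lin_sub vecsOn_finite[of "{..<n}"] finite_subset by blast

lemma lin_card_pos: "linear_code n C \<Longrightarrow> card C > 0"
  using lin_finite[of n C] unfolding linear_code_def by (auto simp: card_gt_0_iff)

lemma dual_card: "linear_code n C \<Longrightarrow> card (dual_code n C) * card C = 2 ^ n"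
  unfolding dual_eq using ann_card[of "{..<n}" n C] lin_sub[of n C]
  unfolding linear_code_def by simp

lemma dual_linear: "linear_code n (dual_code n C)"
  unfolding linear_code_def dual_eq vecs_eq
proof (intro conjI ballI)
  show "(\<lambda>_. False) \<in> {x \<in> vecsOn {..<n}. \<forall>y\<in>C. even (cnt n x y)}"
    by (simp add: vecsOn_def cnt_comm[of n "\<lambda>_. False"])
next
  fix x y assume x: "x \<in> {x \<in> vecsOn {..<n}. \<forall>y\<in>C. even (cnt n x y)}"
    and y: "y \<in> {x \<in> vecsOn {..<n}. \<forall>y\<in>C. even (cnt n x y)}"
  have "even (cnt n (vxor x y) z)" if "z \<in> C" for z
  proof -
    have "cnt n (vxor x y) z = cnt n z (vxor x y)" by (rule cnt_comm)
    moreover have "even (cnt n z x)" "even (cnt n z y)"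
      using x y that cnt_comm[of n z] by auto
    ultimately show ?thesis using even_cnt_xor[of n z x y] by simp
  qed
  thus "vxor x y \<in> {x \<in> vecsOn {..<n}. \<forall>y\<in>C. even (cnt n x y)}"
    using x y vecsOn_xor by auto
qed auto


locale lcode =
  fixes n :: nat and L :: "(nat \<Rightarrow> bool) set"
  assumes lin: "linear_code n L"
begin

lemma L_sub: "L \<subseteq> vecs n" using lin unfolding linear_code_def by simp
lemma L0: "(\<lambda>_. False) \<in> L" using lin unfolding linear_code_def by simp
lemma Lx: "x \<in> L \<Longrightarrow> y \<in> L \<Longrightarrow> vxor x y \<in> L" using lin unfolding linear_code_def by simp
lemma Lfin: "finite L" using lin_finite[OF lin] .

lemma fin_vecs: "finite (vecs n)" unfolding vecs_eq by (rule vecsOn_finite) simp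
lemma card_vecs: "card (vecs n) = 2 ^ n" unfolding vecs_eq by (subst vecsOn_card) auto

lemma vecs_xor: "x \<in> vecs n \<Longrightarrow> y \<in> vecs n \<Longrightarrow> vxor x y \<in> vecs n"
  unfolding vecs_eq by (rule vecsOn_xor)

lemma mem_coset: "y \<in> vxor x ` L \<longleftrightarrow> vxor x y \<in> L"
proof
  assume "y \<in> vxor x ` L" then obtain l where "l \<in> L" "y = vxor x l" by auto
  thus "vxor x y \<in> L" by (simp add: vxor_cancel)
next
  assume "vxor x y \<in> L"
  moreover have "y = vxor x (vxor x y)" by (simp add: vxor_cancel)
  ultimately show "y \<in> vxor x ` L" by blast
qed

lemma coset_sub: "x \<in> vecs n \<Longrightarrow> vxor x ` L \<subseteq> vecs n"
  using L_sub vecs_xor by auto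

lemma coset_card: "card (vxor x ` L) = card L"
proof (rule card_image)
  show "inj_on (vxor x) L"
    by (rule inj_onI) (metis vxor_comm vxor_self)
qed

lemma coset_self: "x \<in> vxor x ` L"
  using L0 mem_coset by simp

lemma coset_eq: "vxor x1 x2 \<in> L \<Longrightarrow> vxor x1 ` L = vxor x2 ` L"
proof -
  assume a: "vxor x1 x2 \<in> L"
  have "vxor x1 y \<in> L \<longleftrightarrow> vxor x2 y \<in> L" for y
  proof -
    have e1: "vxor x2 y = vxor (vxor x1 x2) (vxor x1 y)" by (auto simp: vxor_def)
    have e2: "vxor x1 y = vxor (vxor x1 x2) (vxor x2 y)" by (auto simp: vxor_def)
    show ?thesis using a Lx e1 e2 by metis
  qed
  thus ?thesis using mem_coset by blast
qed

abbreviation "CS \<equiv> cosets (vecs n) L"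

lemma cosets_disj: "w1 \<in> CS \<Longrightarrow> w2 \<in> CS \<Longrightarrow> z \<in> w1 \<Longrightarrow> z \<in> w2 \<Longrightarrow> w1 = w2"
proof -
  assume a: "w1 \<in> CS" "w2 \<in> CS" "z \<in> w1" "z \<in> w2"
  obtain x1 where w1: "w1 = vxor x1 ` L" using a(1) unfolding cosets_def by blast
  obtain x2 where w2: "w2 = vxor x2 ` L" using a(2) unfolding cosets_def by blast
  have z: "vxor x1 z \<in> L" "vxor x2 z \<in> L"
    using a(3,4) w1 w2 mem_coset by blast+
  have "vxor x1 x2 = vxor (vxor x1 z) (vxor x2 z)" by (auto simp: vxor_def)
  hence "vxor x1 x2 \<in> L" using z Lx by simp
  thus ?thesis using w1 w2 coset_eq by simp
qed

lemma cosets_fin: "finite CS" unfolding cosets_def using fin_vecs by simp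

lemma cosets_Union: "\<Union>CS = vecs n"
proof
  show "\<Union>CS \<subseteq> vecs n"
  proof
    fix y assume "y \<in> \<Union>CS"
    then obtain x where "x \<in> vecs n" "y \<in> vxor x ` L" unfolding cosets_def by auto
    thus "y \<in> vecs n" using coset_sub by blast
  qed
  show "vecs n \<subseteq> \<Union>CS"
  proof
    fix x assume "x \<in> vecs n"
    hence "vxor x ` L \<in> CS" unfolding cosets_def by simp
    thus "x \<in> \<Union>CS" using coset_self by blast
  qed
qed

lemma coset_in: "w \<in> CS \<Longrightarrow> w \<subseteq> vecs n"
  using cosets_Union by blast

lemma coset_fin: "w \<in> CS \<Longrightarrow> finite w"
  using coset_in fin_vecs finite_subset by blast

lemma coset_card': "w \<in> CS \<Longrightarrow> card w = card L"
  unfolding cosets_def using coset_card by auto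

lemma cosets_card: "card CS * card L = 2 ^ n"
proof -
  have "card L * card CS = card (\<Union>CS)"
  proof (rule card_partition)
    show "finite CS" by (rule cosets_fin)
    show "finite (\<Union>CS)" using cosets_Union fin_vecs by simp
    show "\<And>c. c \<in> CS \<Longrightarrow> card c = card L" by (rule coset_card')
    show "\<And>c1 c2. c1 \<in> CS \<Longrightarrow> c2 \<in> CS \<Longrightarrow> c1 \<noteq> c2 \<Longrightarrow> c1 \<inter> c2 = {}"
      using cosets_disj by blast
  qed
  thus ?thesis using cosets_Union card_vecs by (simp add: mult.commute)
qed

lemma sum_cosets: "(\<Sum>w\<in>CS. \<Sum>x\<in>w. f x) = (\<Sum>x\<in>vecs n. f x)"
proof -
  have "(\<Sum>x\<in>\<Union>CS. f x) = (sum \<circ> sum) f CS"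
    by (rule sum.Union_disjoint) (use coset_fin cosets_disj in auto)
  thus ?thesis using cosets_Union by simp
qed

lemma legit_zero: "legit_error (vecs n) L = 0"
proof -
  have "legit_decode (vecs n) L x = w" if "w \<in> CS" "x \<in> w" for w x
  proof -
    have "legit_decode (vecs n) L x \<in> CS \<and> x \<in> legit_decode (vecs n) L x"
      unfolding legit_decode_def by (rule someI[of _ w]) (use that in simp)
    thus ?thesis using cosets_disj that by blast
  qed
  thus ?thesis unfolding legit_error_def by simp
qed

end


locale ccode =
  fixes n :: nat and C :: "(nat \<Rightarrow> bool) set"
  assumes linC: "linear_code n C"
begin

abbreviation "D \<equiv> dual_code n C"

sublocale C: lcode n C by (unfold_locales) (rule linC)
sublocale D: lcode n D by (unfold_locales) (rule dual_linear)

definition Nset :: "nat set \<Rightarrow> (nat \<Rightarrow> bool) set" where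
  "Nset U = {c\<in>C. \<forall>i. i \<notin> U \<longrightarrow> \<not> c i}"

definition Nc :: "nat set \<Rightarrow> nat" where "Nc U = card (Nset U)"

lemma Nset_sub: "Nset U \<subseteq> C" unfolding Nset_def by auto
lemma Nset_fin: "finite (Nset U)" using Nset_sub C.Lfin finite_subset by blast
lemma Nset_0: "(\<lambda>_. False) \<in> Nset U" unfolding Nset_def using C.L0 by simp
lemma Nc_pos: "Nc U \<ge> 1"
  unfolding Nc_def using Nset_fin Nset_0 by (metis One_nat_def Suc_leI card_gt_0_iff empty_iff)
lemma Nc_le: "Nc U \<le> card C" unfolding Nc_def using Nset_sub C.Lfin by (rule card_mono[rotated])
lemma Nc_mono: "U \<subseteq> U' \<Longrightarrow> Nc U \<le> Nc U'"
  unfolding Nc_def by (rule card_mono[OF Nset_fin]) (auto simp: Nset_def)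

lemma Nc_insert: "Nc (insert a U) \<le> 2 * Nc U"
proof -
  let ?A = "{c\<in>Nset (insert a U). c a}"
  have split: "Nset (insert a U) \<subseteq> Nset U \<union> ?A" unfolding Nset_def by auto
  have "card ?A \<le> Nc U"
  proof (cases "?A = {}")
    case True show ?thesis by (simp only: True card.empty zero_le)
  next
    case False
    then obtain c1 where c1: "c1 \<in> ?A" by blast
    have "inj_on (\<lambda>c. vxor c c1) ?A" by (rule inj_onI) (metis vxor_self)
    moreover have "(\<lambda>c. vxor c c1) ` ?A \<subseteq> Nset U"
    proof
      fix y assume "y \<in> (\<lambda>c. vxor c c1) ` ?A"
      then obtain c where c: "c \<in> ?A" "y = vxor c c1" by blast
      have "y \<in> C" using c c1 C.Lx unfolding Nset_def by auto
      moreover have "\<forall>i. i \<notin> U \<longrightarrow> \<not> y i" using c c1 unfolding Nset_def vxor_def by auto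
      ultimately show "y \<in> Nset U" unfolding Nset_def by simp
    qed
    ultimately show ?thesis unfolding Nc_def using Nset_fin card_inj_on_le by blast
  qed
  moreover have "Nc (insert a U) \<le> card (Nset U \<union> ?A)"
    unfolding Nc_def by (rule card_mono[OF _ split]) (use Nset_fin in simp)
  moreover have "card (Nset U \<union> ?A) \<le> Nc U + card ?A"
    unfolding Nc_def by (rule card_Un_le)
  ultimately show ?thesis by simp
qed

lemma consistent_card:
  assumes x: "x \<in> C"
  shows "card {c\<in>C. \<forall>i<n. i \<notin> E \<longrightarrow> c i = x i} = Nc E"
proof -
  have "{c\<in>C. \<forall>i<n. i \<notin> E \<longrightarrow> c i = x i} = vxor x ` Nset E"
  proof
    show "{c\<in>C. \<forall>i<n. i \<notin> E \<longrightarrow> c i = x i} \<subseteq> vxor x ` Nset E"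
    proof
      fix c assume c: "c \<in> {c\<in>C. \<forall>i<n. i \<notin> E \<longrightarrow> c i = x i}"
      have "vxor x c \<in> C" using c x C.Lx by auto
      moreover have "\<forall>i. i \<notin> E \<longrightarrow> \<not> vxor x c i"
      proof (intro allI impI)
        fix i assume i: "i \<notin> E"
        show "\<not> vxor x c i"
        proof (cases "i < n")
          case True thus ?thesis using c i unfolding vxor_def by auto
        next
          case False
          hence "\<not> x i" "\<not> c i" using x c C.L_sub unfolding vecs_def by auto
          thus ?thesis unfolding vxor_def by auto
        qed
      qed
      ultimately have "vxor x c \<in> Nset E" unfolding Nset_def by simp
      moreover have "c = vxor x (vxor x c)" by (simp add: vxor_cancel)
      ultimately show "c \<in> vxor x ` Nset E" by blast
    qed
    show "vxor x ` Nset E \<subseteq> {c\<in>C. \<forall>i<n. i \<notin> E \<longrightarrow> c i = x i}"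
    proof
      fix c assume "c \<in> vxor x ` Nset E"
      then obtain m where m: "m \<in> Nset E" "c = vxor x m" by blast
      have "c \<in> C" using m x C.Lx Nset_sub by auto
      moreover have "\<forall>i<n. i \<notin> E \<longrightarrow> c i = x i" using m unfolding Nset_def vxor_def by auto
      ultimately show "c \<in> {c\<in>C. \<forall>i<n. i \<notin> E \<longrightarrow> c i = x i}" by simp
    qed
  qed
  moreover have "card (vxor x ` Nset E) = Nc E"
    unfolding Nc_def by (rule card_image) (rule inj_onI, metis vxor_cancel)
  ultimately show ?thesis by simp
qed

end


context ccode begin

definition Kset :: "nat set \<Rightarrow> (nat \<Rightarrow> bool) set" where
  "Kset U = {d\<in>D. \<forall>i\<in>U. \<not> d i}"

lemma K_formula:
  assumes U: "U \<subseteq> {..<n}"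
  shows "card (Kset U) * card C = 2 ^ (n - card U) * Nc U"
proof -
  define S where "S = {..<n} - U"
  define pr where "pr = (\<lambda>c i. c i \<and> i \<in> S)"
  define V where "V = pr ` C"
  have cardS: "card S = n - card U" unfolding S_def using U by (simp add: card_Diff_subset finite_subset)
  have pr_xor: "pr (vxor x y) = vxor (pr x) (pr y)" for x y unfolding pr_def vxor_def by auto
  have V1: "V \<subseteq> vecsOn S" unfolding V_def pr_def vecsOn_def by auto
  have V2: "(\<lambda>_. False) \<in> V"
  proof -
    have "pr (\<lambda>_. False) = (\<lambda>_. False)" unfolding pr_def by simp
    thus ?thesis unfolding V_def using C.L0 by (metis image_eqI)
  qed
  have V3: "\<forall>x\<in>V. \<forall>y\<in>V. vxor x y \<in> V"
    unfolding V_def using pr_xor C.Lx by (metis (no_types, lifting) image_iff)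
  have ann: "card {x\<in>vecsOn S. \<forall>y\<in>V. even (cnt n x y)} * card V = 2 ^ card S"
    by (rule ann_card) (use V1 V2 V3 S_def in auto)
  have cnt_pr: "cnt n x (pr c) = cnt n x c" if "x \<in> vecsOn S" for x c
  proof -
    have "{i\<in>{..<n}. x i \<and> pr c i} = {i\<in>{..<n}. x i \<and> c i}"
      using that unfolding pr_def vecsOn_def by auto
    thus ?thesis unfolding cnt_def by simp
  qed
  have Keq: "{x\<in>vecsOn S. \<forall>y\<in>V. even (cnt n x y)} = Kset U"
  proof -
    have vs: "x \<in> vecsOn S \<longleftrightarrow> x \<in> vecsOn {..<n} \<and> (\<forall>i\<in>U. \<not> x i)" for x
      unfolding vecsOn_def S_def using U by auto
    show ?thesis unfolding Kset_def dual_eq V_def using vs cnt_pr by auto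
  qed
  define A where "A = (\<lambda>v. {c\<in>C. pr c = v})"
  have CU: "C = (\<Union>v\<in>V. A v)" unfolding A_def V_def by auto
  have fibre: "card (A v) = Nc U" if "v \<in> V" for v
  proof -
    obtain c0 where c0: "c0 \<in> C" "v = pr c0" using \<open>v \<in> V\<close> V_def by blast
    have eq: "A v = vxor c0 ` Nset U"
    proof
      show "A v \<subseteq> vxor c0 ` Nset U"
      proof
        fix c assume c: "c \<in> A v"
        hence cC: "c \<in> C" and pc: "pr c = pr c0" using c0 unfolding A_def by auto
        have "vxor c0 c \<in> C" using cC c0 C.Lx by auto
        moreover have "\<not> vxor c0 c i" if "i \<notin> U" for i
        proof (cases "i < n")
          case True
          hence "i \<in> S" using that unfolding S_def by auto
          hence "c i = c0 i" using fun_cong[OF pc, of i] unfolding pr_def by auto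
          thus ?thesis unfolding vxor_def by auto
        next
          case False
          hence "\<not> c i" "\<not> c0 i" using cC c0 C.L_sub unfolding vecs_def by auto
          thus ?thesis unfolding vxor_def by auto
        qed
        ultimately have "vxor c0 c \<in> Nset U" unfolding Nset_def by auto
        thus "c \<in> vxor c0 ` Nset U" by (metis vxor_cancel image_eqI)
      qed
      show "vxor c0 ` Nset U \<subseteq> A v"
      proof
        fix c assume "c \<in> vxor c0 ` Nset U"
        then obtain m where m: "m \<in> Nset U" "c = vxor c0 m" by blast
        have "c \<in> C" using m c0 C.Lx Nset_sub by auto
        moreover have "pr c = pr c0"
          using m unfolding pr_def Nset_def vxor_def S_def by auto
        ultimately show "c \<in> A v" unfolding A_def using c0 by simp
      qed
    qed
    have "card (vxor c0 ` Nset U) = Nc U"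
      unfolding Nc_def by (rule card_image) (rule inj_onI, metis vxor_cancel)
    thus ?thesis using eq by simp
  qed
  have finV: "finite V" unfolding V_def using C.Lfin by simp
  have "card C = (\<Sum>v\<in>V. card (A v))"
    unfolding CU
    by (rule card_UN_disjoint) (use finV C.Lfin in \<open>auto simp: A_def\<close>)
  also have "\<dots> = card V * Nc U" using fibre by simp
  finally have cC: "card C = card V * Nc U" .
  have "card (Kset U) * card C = (card (Kset U) * card V) * Nc U" using cC by simp
  also have "\<dots> = 2 ^ (n - card U) * Nc U" using ann Keq cardS by simp
  finally show ?thesis .
qed

end


lemma sum_vecs_pow:
  "(\<Sum>x\<in>vecs n. F x) = (\<Sum>X\<in>Pow {..<n}. F (\<lambda>i. i \<in> X))"
proof -
  have b: "bij_betw (\<lambda>A i. i \<in> A) (Pow {..<n}) (vecs n)"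
    unfolding vecs_eq by (rule bij_betwI[where g="\<lambda>x. {i. x i}"]) (auto simp: vecsOn_def)
  show ?thesis using sum.reindex_bij_betw[OF b, of F] by simp
qed

lemma prod_split_set:
  fixes G :: "nat \<Rightarrow> bool \<Rightarrow> real"
  assumes "X \<subseteq> {..<n}"
  shows "(\<Prod>i<n. G i (i \<in> X)) = (\<Prod>i\<in>X. G i True) * (\<Prod>i\<in>{..<n}-X. G i False)"
proof -
  have "(\<Prod>i<n. G i (i \<in> X)) = (\<Prod>i\<in>X. G i (i \<in> X)) * (\<Prod>i\<in>{..<n}-X. G i (i \<in> X))"
    using prod.subset_diff[of X "{..<n}" "\<lambda>i. G i (i \<in> X)"] assms by (simp add: mult.commute)
  thus ?thesis by simp
qed

lemma sum_prod_vecs: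
  fixes G :: "nat \<Rightarrow> bool \<Rightarrow> real"
  shows "(\<Sum>x\<in>vecs n. \<Prod>i<n. G i (x i)) = (\<Prod>i<n. G i False + G i True)"
proof -
  have "(\<Prod>i<n. G i True + G i False) = (\<Sum>X\<in>Pow {..<n}. (\<Prod>i\<in>X. G i True) * (\<Prod>i\<in>{..<n}-X. G i False))"
    by (rule prod_add) simp
  also have "\<dots> = (\<Sum>X\<in>Pow {..<n}. \<Prod>i<n. G i (i \<in> X))"
    by (rule sum.cong) (auto simp: prod_split_set)
  also have "\<dots> = (\<Sum>x\<in>vecs n. \<Prod>i<n. G i (x i))" by (rule sum_vecs_pow[symmetric])
  finally show ?thesis by (simp add: add.commute)
qed

lemma prod_if_all:
  fixes d :: "nat \<Rightarrow> real"
  assumes "finite U"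
  shows "(\<Prod>i\<in>U. if P i then d i else 0) = (if \<forall>i\<in>U. P i then \<Prod>i\<in>U. d i else 0)"
proof (cases "\<forall>i\<in>U. P i")
  case True thus ?thesis by (simp cong: prod.cong)
next
  case False
  then obtain j where "j \<in> U" "\<not> P j" by blast
  thus ?thesis using assms by (auto intro!: prod_zero)
qed

definition mu :: "(nat \<Rightarrow> bool \<Rightarrow> real) \<Rightarrow> nat \<Rightarrow> real" where
  "mu G i = min (G i False) (G i True)"
definition del :: "(nat \<Rightarrow> bool \<Rightarrow> real) \<Rightarrow> nat \<Rightarrow> real" where
  "del G i = \<bar>G i False - G i True\<bar>"
definition bet :: "(nat \<Rightarrow> bool \<Rightarrow> real) \<Rightarrow> nat \<Rightarrow> bool" where
  "bet G i = (G i True > G i False)"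

lemma G_decomp: "G i b = mu G i + (if b = bet G i then del G i else 0)"
  unfolding mu_def del_def bet_def by (cases b) auto

lemma prod_expand:
  "(\<Prod>i<n. G i (x i)) = (\<Sum>U\<in>Pow {..<n}.
     (if \<forall>i\<in>U. x i = bet G i then \<Prod>i\<in>U. del G i else 0) * (\<Prod>i\<in>{..<n}-U. mu G i))"
proof -
  have "(\<Prod>i<n. G i (x i)) = (\<Prod>i<n. (if x i = bet G i then del G i else 0) + mu G i)"
    by (rule prod.cong) (simp_all add: G_decomp[of G _ "x _"] add.commute)
  also have "\<dots> = (\<Sum>U\<in>Pow {..<n}. (\<Prod>i\<in>U. if x i = bet G i then del G i else 0) * (\<Prod>i\<in>{..<n}-U. mu G i))"
    by (rule prod_add) simp
  also have "\<dots> = (\<Sum>U\<in>Pow {..<n}.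
     (if \<forall>i\<in>U. x i = bet G i then \<Prod>i\<in>U. del G i else 0) * (\<Prod>i\<in>{..<n}-U. mu G i))"
    by (rule sum.cong) (auto simp: prod_if_all finite_subset)
  finally show ?thesis .
qed

lemma log2_le: "y > 0 \<Longrightarrow> log 2 y \<le> (y - 1) / ln 2"
  unfolding log_def using ln_le_minus_one[of y] by (simp add: divide_right_mono)

lemma gibbs:
  fixes q p :: "'a \<Rightarrow> real"
  assumes fin: "finite W" and q: "\<forall>w\<in>W. q w \<ge> 0" and p: "\<forall>w\<in>W. p w \<ge> 0"
    and sq: "sum q W = 1" and sp: "sum p W \<le> 1" and pos: "\<forall>w\<in>W. q w > 0 \<longrightarrow> p w > 0"
  shows "(\<Sum>w\<in>W. q w * (- log 2 (q w))) \<le> (\<Sum>w\<in>W. q w * (- log 2 (p w)))"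
proof -
  have pt: "q w * (log 2 (p w) - log 2 (q w)) \<le> (p w - q w) / ln 2" if w: "w \<in> W" for w
  proof (cases "q w > 0")
    case True
    hence pw: "p w > 0" using pos w by auto
    have "log 2 (p w) - log 2 (q w) = log 2 (p w / q w)" using True pw by (simp add: log_divide)
    also have "\<dots> \<le> (p w / q w - 1) / ln 2" using True pw by (intro log2_le) simp
    finally have "q w * (log 2 (p w) - log 2 (q w)) \<le> q w * ((p w / q w - 1) / ln 2)"
      using True mult_left_mono[of _ _ "q w"] by (metis less_eq_real_def)
    also have "\<dots> = (p w - q w) / ln 2" using True by (simp add: field_simps)
    finally show ?thesis .
  next
    case False
    hence "q w = 0" using q w by force
    thus ?thesis using p w by simp
  qed
  have "(\<Sum>w\<in>W. q w * (- log 2 (p w))) - (\<Sum>w\<in>W. q w * (- log 2 (q w))) =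
      - (\<Sum>w\<in>W. q w * (log 2 (p w) - log 2 (q w)))"
    by (simp add: sum_subtractf[symmetric] right_diff_distrib sum_negf[symmetric] algebra_simps)
  moreover have "(\<Sum>w\<in>W. q w * (log 2 (p w) - log 2 (q w))) \<le> (\<Sum>w\<in>W. (p w - q w) / ln 2)"
    by (rule sum_mono) (rule pt)
  moreover have "(\<Sum>w\<in>W. (p w - q w) / ln 2) = (sum p W - sum q W) / ln 2"
    by (simp add: sum_divide_distrib[symmetric] sum_subtractf)
  moreover have "(sum p W - sum q W) / ln 2 \<le> 0" using sq sp by (simp add: divide_nonpos_pos)
  ultimately show ?thesis by linarith
qed


context ccode begin

definition cntB :: "nat set \<Rightarrow> (nat \<Rightarrow> bool) \<Rightarrow> (nat \<Rightarrow> bool) set \<Rightarrow> nat" where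
  "cntB U b w = card {x\<in>w. \<forall>i\<in>U. x i = b i}"

lemma cntB_le:
  assumes w: "w \<in> D.CS"
  shows "cntB U b w \<le> card (Kset U)"
proof -
  let ?B = "{x\<in>w. \<forall>i\<in>U. x i = b i}"
  show ?thesis
  proof (cases "?B = {}")
    case True thus ?thesis unfolding cntB_def by (simp only: True card.empty zero_le)
  next
    case False
    then obtain x1 where x1: "x1 \<in> ?B" by blast
    obtain x0 where w0: "w = vxor x0 ` D" using w unfolding cosets_def by blast
    have "inj_on (\<lambda>x. vxor x x1) ?B" by (rule inj_onI) (metis vxor_self)
    moreover have "(\<lambda>x. vxor x x1) ` ?B \<subseteq> Kset U"
    proof
      fix y assume "y \<in> (\<lambda>x. vxor x x1) ` ?B"
      then obtain x where x: "x \<in> ?B" "y = vxor x x1" by blast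
      have a: "vxor x0 x \<in> D" "vxor x0 x1 \<in> D" using x x1 w0 D.mem_coset by auto
      have "y = vxor (vxor x0 x) (vxor x0 x1)" using x(2) unfolding vxor_def by auto
      hence "y \<in> D" using a D.Lx by simp
      moreover have "\<forall>i\<in>U. \<not> y i" using x x1 unfolding vxor_def by auto
      ultimately show "y \<in> Kset U" unfolding Kset_def by simp
    qed
    moreover have "finite (Kset U)"
      unfolding Kset_def using D.Lfin by simp
    ultimately show ?thesis unfolding cntB_def using card_inj_on_le by blast
  qed
qed

lemma cntB_sum:
  assumes U: "U \<subseteq> {..<n}"
  shows "(\<Sum>w\<in>D.CS. cntB U b w) = 2 ^ (n - card U)"
proof -
  have "(\<Sum>w\<in>D.CS. cntB U b w) = (\<Sum>w\<in>D.CS. \<Sum>x\<in>w. if \<forall>i\<in>U. x i = b i then 1 else 0)"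
    unfolding cntB_def
    by (rule sum.cong[OF refl]) (simp add: sum.inter_filter[symmetric] D.coset_fin)
  also have "\<dots> = (\<Sum>x\<in>vecs n. if \<forall>i\<in>U. x i = b i then 1 else 0)"
    by (rule D.sum_cosets)
  also have "\<dots> = card {x\<in>vecs n. \<forall>i\<in>U. x i = b i}"
    by (simp add: sum.inter_filter[symmetric] C.fin_vecs)
  also have "\<dots> = 2 ^ (n - card U)"
  proof -
    define bU where "bU = (\<lambda>i. i \<in> U \<and> b i)"
    define S where "S = {..<n} - U"
    have bUv: "bU \<in> vecs n" unfolding bU_def vecs_def using U by auto
    have "bij_betw (\<lambda>y. vxor y bU) (vecsOn S) {x\<in>vecs n. \<forall>i\<in>U. x i = b i}"
    proof (rule bij_betwI[where g="\<lambda>y. vxor y bU"])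
      show "(\<lambda>y. vxor y bU) \<in> vecsOn S \<rightarrow> {x \<in> vecs n. \<forall>i\<in>U. x i = b i}"
        unfolding S_def bU_def vecsOn_def vecs_def vxor_def using U by auto
      show "(\<lambda>y. vxor y bU) \<in> {x \<in> vecs n. \<forall>i\<in>U. x i = b i} \<rightarrow> vecsOn S"
        unfolding S_def bU_def vecsOn_def vecs_def vxor_def using U by auto
    qed (simp_all add: vxor_self)
    hence "card {x\<in>vecs n. \<forall>i\<in>U. x i = b i} = card (vecsOn S)"
      by (simp add: bij_betw_same_card)
    also have "\<dots> = 2 ^ card S" by (rule vecsOn_card) (simp add: S_def)
    also have "card S = n - card U" unfolding S_def using U by (simp add: card_Diff_subset finite_subset)
    finally show ?thesis .
  qed
  finally show ?thesis .
qed

lemma cardD_pos: "card D > 0" using lin_card_pos[OF dual_linear] .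
lemma cardC_pos: "card C > 0" using lin_card_pos[OF linC] .

lemma CS_card: "card D.CS = card C"
proof -
  have "card D.CS * card D = card D * card C" using D.cosets_card dual_card[OF linC] by simp
  thus ?thesis using cardD_pos by (simp add: mult.commute)
qed

end


context ccode begin

definition Aw :: "(nat \<Rightarrow> bool \<Rightarrow> real) \<Rightarrow> (nat \<Rightarrow> bool) set \<Rightarrow> real" where
  "Aw G w = (\<Sum>x\<in>w. \<Prod>i<n. G i (x i))"

definition integrand :: "(nat \<Rightarrow> bool \<Rightarrow> real) \<Rightarrow> real" where
  "integrand G = (let M = real (card D.CS);
      pz = (1 / M) * (\<Sum>w\<in>D.CS. (1 / real (card w)) * (\<Sum>x\<in>w. \<Prod>i<n. G i (x i)))
    in \<Sum>w\<in>D.CS. ((1 / real (card w)) * (\<Sum>x\<in>w. \<Prod>i<n. G i (x i)) / M) *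
        (- log 2 (((1 / real (card w)) * (\<Sum>x\<in>w. \<Prod>i<n. G i (x i)) / M) / pz)))"

lemma Md: "real (card D.CS) * real (card D) = 2 ^ n"
  using D.cosets_card[unfolded] dual_card[OF linC] CS_card
  by (metis mult.commute of_nat_mult of_nat_numeral of_nat_power)

lemma sumA: "(\<Sum>w\<in>D.CS. Aw G w) = (\<Prod>i<n. G i False + G i True)"
  unfolding Aw_def by (simp add: D.sum_cosets sum_prod_vecs)

lemma integrand_eq:
  "integrand G = (\<Sum>w\<in>D.CS. (Aw G w / 2 ^ n) * (- log 2 (Aw G w / (\<Prod>i<n. G i False + G i True))))"
proof -
  define d where "d = real (card D)"
  define M where "M = real (card D.CS)"
  define T where "T = (\<Prod>i<n. G i False + G i True)"
  have d0: "d > 0" unfolding d_def using cardD_pos by simp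
  have Md': "M * d = 2 ^ n" unfolding M_def d_def using Md .
  have M0: "M > 0" using Md' d0 by (metis zero_less_mult_pos2 zero_less_numeral zero_less_power)
  have cw: "real (card w) = d" if "w \<in> D.CS" for w using D.coset_card'[OF that] unfolding d_def by simp
  have pz: "(1 / M) * (\<Sum>w\<in>D.CS. (1 / real (card w)) * Aw G w) = T / 2 ^ n"
  proof -
    have "(\<Sum>w\<in>D.CS. (1 / real (card w)) * Aw G w) = (\<Sum>w\<in>D.CS. (1 / d) * Aw G w)"
      by (rule sum.cong) (simp_all add: cw)
    also have "\<dots> = T / d" unfolding T_def using sumA[of G] by (simp add: sum_divide_distrib[symmetric])
    finally show ?thesis using Md' by (simp add: field_simps)
  qed
  have "integrand G = (\<Sum>w\<in>D.CS. ((1 / real (card w)) * Aw G w / M) *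
        (- log 2 (((1 / real (card w)) * Aw G w / M) / (T / 2 ^ n))))"
    unfolding integrand_def Let_def M_def[symmetric] Aw_def[symmetric] by (simp only: pz)
  also have "\<dots> = (\<Sum>w\<in>D.CS. (Aw G w / 2 ^ n) * (- log 2 (Aw G w / T)))"
  proof (rule sum.cong[OF refl])
    fix w assume w: "w \<in> D.CS"
    have e: "(1 / real (card w)) * Aw G w / M = Aw G w / 2 ^ n"
      using cw[OF w] Md' d0 M0 by (simp add: field_simps)
    have "Aw G w / 2 ^ n / (T / 2 ^ n) = Aw G w / T" by (simp add: field_simps)
    thus "(1 / real (card w)) * Aw G w / M * (- log 2 ((1 / real (card w)) * Aw G w / M / (T / 2 ^ n))) =
        Aw G w / 2 ^ n * (- log 2 (Aw G w / T))" by (simp only: e)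
  qed
  finally show ?thesis unfolding T_def .
qed

end


context ccode begin

lemma A_pos:
  assumes G: "\<And>i b. G i b > 0" and w: "w \<in> D.CS"
  shows "Aw G w > 0"
proof -
  have "w \<noteq> {}" using w unfolding cosets_def using D.coset_self by blast
  moreover have "finite w" using D.coset_fin[OF w] .
  ultimately show ?thesis unfolding Aw_def
    by (intro sum_pos prod_pos) (auto intro: G less_imp_le)
qed

lemma T_pos: "(\<And>i b. G i b > 0) \<Longrightarrow> (\<Prod>i<n. G i False + G i True) > (0::real)"
  by (rule prod_pos) (simp add: add_pos_pos)

lemma prod_half: "(\<Prod>i\<in>A. f i / 2) = (\<Prod>i\<in>A. f i) / 2 ^ card A" for f :: "nat \<Rightarrow> real"
  by (simp add: prod_dividef)

lemma integrand_UB: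
  assumes G: "\<And>i b. G i b > 0"
  shows "integrand G \<le> (\<Prod>i<n. (G i False + G i True) / 2) * log 2 (real (card C))"
proof -
  define T where "T = (\<Prod>i<n. G i False + G i True)"
  define M where "M = real (card D.CS)"
  have T0: "T > 0" unfolding T_def using T_pos G by blast
  have M0: "M > 0" unfolding M_def using CS_card cardC_pos by simp
  define P where "P = (\<lambda>w. Aw G w / T)"
  have sP: "sum P D.CS = 1"
  proof -
    have "sum P D.CS = (\<Sum>w\<in>D.CS. Aw G w) / T" unfolding P_def by (simp add: sum_divide_distrib)
    also have "\<dots> = 1"
    proof -
      have "(\<Sum>w\<in>D.CS. Aw G w) = T" unfolding T_def by (rule sumA)
      thus ?thesis using T0 by simp
    qed
    finally show ?thesis .
  qed
  have g: "(\<Sum>w\<in>D.CS. P w * (- log 2 (P w))) \<le> (\<Sum>w\<in>D.CS. P w * (- log 2 (1 / M)))"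
  proof (rule gibbs)
    show "finite D.CS" by (rule D.cosets_fin)
    show "\<forall>w\<in>D.CS. 0 \<le> P w" unfolding P_def using A_pos[OF G] T0 by (simp add: less_imp_le)
    show "\<forall>w\<in>D.CS. 0 \<le> 1 / M" using M0 by simp
    show "sum P D.CS = 1" by (rule sP)
    show "(\<Sum>w\<in>D.CS. 1 / M) \<le> 1" using M0 unfolding M_def by simp
    show "\<forall>w\<in>D.CS. 0 < P w \<longrightarrow> 0 < 1 / M" using M0 by simp
  qed
  also have "\<dots> = log 2 M" using sP M0 by (simp add: sum_distrib_right[symmetric] log_divide)
  finally have g: "(\<Sum>w\<in>D.CS. P w * (- log 2 (P w))) \<le> log 2 M" .
  have "integrand G = (\<Sum>w\<in>D.CS. (T / 2 ^ n) * (P w * (- log 2 (P w))))"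
    unfolding integrand_eq T_def[symmetric] P_def using T0
    by (intro sum.cong) (simp_all add: field_simps)
  also have "\<dots> = (T / 2 ^ n) * (\<Sum>w\<in>D.CS. P w * (- log 2 (P w)))"
    by (simp add: sum_distrib_left)
  also have "\<dots> \<le> (T / 2 ^ n) * log 2 M" using g T0 by (intro mult_left_mono) simp_all
  also have "T / 2 ^ n = (\<Prod>i<n. (G i False + G i True) / 2)"
    unfolding T_def by (simp add: prod_half)
  also have "M = real (card C)" unfolding M_def CS_card ..
  finally show ?thesis .
qed

end


context ccode begin

lemma Aw_expand:
  "Aw G w = (\<Sum>U\<in>Pow {..<n}. ((\<Prod>i\<in>U. del G i) * (\<Prod>i\<in>{..<n}-U. mu G i)) * real (cntB U (bet G) w))"
  if w: "w \<in> D.CS"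
proof -
  have fw: "finite w" using D.coset_fin[OF w] .
  have "Aw G w = (\<Sum>x\<in>w. \<Sum>U\<in>Pow {..<n}.
     (if \<forall>i\<in>U. x i = bet G i then \<Prod>i\<in>U. del G i else 0) * (\<Prod>i\<in>{..<n}-U. mu G i))"
    unfolding Aw_def by (rule sum.cong[OF refl]) (rule prod_expand)
  also have "\<dots> = (\<Sum>U\<in>Pow {..<n}. \<Sum>x\<in>w.
     (if \<forall>i\<in>U. x i = bet G i then \<Prod>i\<in>U. del G i else 0) * (\<Prod>i\<in>{..<n}-U. mu G i))"
    by (rule sum.swap)
  also have "\<dots> = (\<Sum>U\<in>Pow {..<n}. ((\<Prod>i\<in>U. del G i) * (\<Prod>i\<in>{..<n}-U. mu G i)) * real (cntB U (bet G) w))"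
  proof (rule sum.cong[OF refl])
    fix U
    have "(\<Sum>x\<in>w. (if \<forall>i\<in>U. x i = bet G i then \<Prod>i\<in>U. del G i else 0) * (\<Prod>i\<in>{..<n}-U. mu G i))
      = (\<Sum>x\<in>w. if \<forall>i\<in>U. x i = bet G i then ((\<Prod>i\<in>U. del G i) * (\<Prod>i\<in>{..<n}-U. mu G i)) else 0)"
      by (rule sum.cong) auto
    also have "\<dots> = (\<Sum>x\<in>{x\<in>w. \<forall>i\<in>U. x i = bet G i}. ((\<Prod>i\<in>U. del G i) * (\<Prod>i\<in>{..<n}-U. mu G i)))"
      by (rule sum.inter_filter[symmetric, OF fw])
    also have "\<dots> = ((\<Prod>i\<in>U. del G i) * (\<Prod>i\<in>{..<n}-U. mu G i)) * real (cntB U (bet G) w)"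
      unfolding cntB_def by simp
    finally show "(\<Sum>x\<in>w. (if \<forall>i\<in>U. x i = bet G i then \<Prod>i\<in>U. del G i else 0) * (\<Prod>i\<in>{..<n}-U. mu G i))
      = ((\<Prod>i\<in>U. del G i) * (\<Prod>i\<in>{..<n}-U. mu G i)) * real (cntB U (bet G) w)" .
  qed
  finally show ?thesis .
qed

lemma per_U:
  assumes G: "\<And>i b. G i b > 0" and U: "U \<subseteq> {..<n}"
  shows "2 ^ (n - card U) * (log 2 (real (card C)) - log 2 (real (Nc U))) \<le>
    (\<Sum>w\<in>D.CS. real (cntB U (bet G) w) * (- log 2 (Aw G w / (\<Prod>i<n. G i False + G i True))))"
proof -
  define T where "T = (\<Prod>i<n. G i False + G i True)"
  have T0: "T > 0" unfolding T_def using T_pos G by blast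
  define m :: real where "m = 2 ^ (n - card U)"
  have m0: "m > 0" unfolding m_def by simp
  define q where "q = (\<lambda>w. real (cntB U (bet G) w) / m)"
  define P where "P = (\<lambda>w. Aw G w / T)"
  define k where "k = real (card C)"
  define N where "N = real (Nc U)"
  have k0: "k > 0" unfolding k_def using cardC_pos by simp
  have N0: "N > 0" unfolding N_def using Nc_pos[of U] by simp
  have sq: "sum q D.CS = 1"
  proof -
    have "sum q D.CS = real (\<Sum>w\<in>D.CS. cntB U (bet G) w) / m" unfolding q_def
      by (simp add: sum_divide_distrib)
    also have "\<dots> = 1" using cntB_sum[OF U, of "bet G"] m0 unfolding m_def by simp
    finally show ?thesis .
  qed
  have sP: "sum P D.CS = 1"
  proof -
    have "sum P D.CS = (\<Sum>w\<in>D.CS. Aw G w) / T" unfolding P_def by (simp add: sum_divide_distrib)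
    also have "\<dots> = 1"
    proof -
      have "(\<Sum>w\<in>D.CS. Aw G w) = T" unfolding T_def by (rule sumA)
      thus ?thesis using T0 by simp
    qed
    finally show ?thesis .
  qed
  have Ppos: "\<forall>w\<in>D.CS. P w > 0" unfolding P_def using A_pos[OF G] T0 by simp
  have g: "(\<Sum>w\<in>D.CS. q w * (- log 2 (q w))) \<le> (\<Sum>w\<in>D.CS. q w * (- log 2 (P w)))"
    by (rule gibbs) (use D.cosets_fin sq sP Ppos m0 in \<open>auto simp: q_def less_imp_le\<close>)
  have qle: "q w \<le> N / k" if w: "w \<in> D.CS" for w
  proof -
    have "real (cntB U (bet G) w) \<le> real (card (Kset U))" using cntB_le[OF w] by simp
    moreover have "real (card (Kset U)) * k = m * N"
      using K_formula[OF U] unfolding k_def m_def N_def by (metis of_nat_mult of_nat_numeral of_nat_power)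
    ultimately have "real (cntB U (bet G) w) * k \<le> m * N" using k0 by (metis mult_right_mono less_imp_le)
    thus ?thesis unfolding q_def using m0 k0 by (simp add: field_simps)
  qed
  have h: "q w * (log 2 k - log 2 N) \<le> q w * (- log 2 (q w))" if w: "w \<in> D.CS" for w
  proof (cases "q w > 0")
    case True
    have "log 2 (q w) \<le> log 2 (N / k)" using True qle[OF w] by simp
    also have "\<dots> = log 2 N - log 2 k" using N0 k0 by (simp add: log_divide)
    finally show ?thesis using True by (intro mult_left_mono) auto
  next
    case False
    hence "q w = 0" unfolding q_def using m0 by (simp add: not_less divide_le_0_iff)
    thus ?thesis by simp
  qed
  have "log 2 k - log 2 N = (\<Sum>w\<in>D.CS. q w * (log 2 k - log 2 N))"
    using sq by (simp add: sum_distrib_right[symmetric])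
  also have "\<dots> \<le> (\<Sum>w\<in>D.CS. q w * (- log 2 (q w)))" by (rule sum_mono) (rule h)
  also have "\<dots> \<le> (\<Sum>w\<in>D.CS. q w * (- log 2 (P w)))" by (rule g)
  finally have "m * (log 2 k - log 2 N) \<le> m * (\<Sum>w\<in>D.CS. q w * (- log 2 (P w)))"
    using m0 by (intro mult_left_mono) auto
  also have "\<dots> = (\<Sum>w\<in>D.CS. real (cntB U (bet G) w) * (- log 2 (P w)))"
    unfolding q_def using m0 by (simp add: sum_distrib_left)
  finally show ?thesis unfolding m_def k_def N_def P_def T_def .
qed

end


context ccode begin

lemma integrand_LB:
  assumes G: "\<And>i b. G i b > 0"
  shows "(\<Sum>U\<in>Pow {..<n}. ((\<Prod>i\<in>U. del G i / 2) * (\<Prod>i\<in>{..<n}-U. mu G i)) *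
            (log 2 (real (card C)) - log 2 (real (Nc U)))) \<le> integrand G"
proof -
  define T where "T = (\<Prod>i<n. G i False + G i True)"
  define c where "c = (\<lambda>U. (\<Prod>i\<in>U. del G i) * (\<Prod>i\<in>{..<n}-U. mu G i))"
  define L where "L = (\<lambda>w. - log 2 (Aw G w / T))"
  have c0: "c U \<ge> 0" for U unfolding c_def mu_def del_def
    by (intro mult_nonneg_nonneg prod_nonneg) (auto intro: less_imp_le G)
  have "integrand G = (\<Sum>w\<in>D.CS. (Aw G w / 2 ^ n) * L w)"
    unfolding integrand_eq L_def T_def ..
  also have "\<dots> = (\<Sum>w\<in>D.CS. \<Sum>U\<in>Pow {..<n}. (c U / 2 ^ n) * (real (cntB U (bet G) w) * L w))"
    by (rule sum.cong[OF refl]) (simp add: Aw_expand c_def sum_divide_distrib sum_distrib_right mult.assoc)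
  also have "\<dots> = (\<Sum>U\<in>Pow {..<n}. (c U / 2 ^ n) * (\<Sum>w\<in>D.CS. real (cntB U (bet G) w) * L w))"
    by (subst sum.swap) (simp add: sum_distrib_left)
  finally have I: "integrand G = \<dots>" .
  have "(\<Sum>U\<in>Pow {..<n}. ((\<Prod>i\<in>U. del G i / 2) * (\<Prod>i\<in>{..<n}-U. mu G i)) *
            (log 2 (real (card C)) - log 2 (real (Nc U)))) =
        (\<Sum>U\<in>Pow {..<n}. (c U / 2 ^ n) * (2 ^ (n - card U) * (log 2 (real (card C)) - log 2 (real (Nc U)))))"
  proof (rule sum.cong[OF refl])
    fix U assume "U \<in> Pow {..<n}"
    hence U: "U \<subseteq> {..<n}" by simp
    hence cU: "card U \<le> n" by (metis card_lessThan card_mono finite_lessThan)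
    have p: "(2::real) ^ n = 2 ^ card U * 2 ^ (n - card U)"
      using cU by (simp add: power_add[symmetric])
    have fU: "finite U" using U finite_subset by blast
    show "((\<Prod>i\<in>U. del G i / 2) * (\<Prod>i\<in>{..<n}-U. mu G i)) *
            (log 2 (real (card C)) - log 2 (real (Nc U))) =
          (c U / 2 ^ n) * (2 ^ (n - card U) * (log 2 (real (card C)) - log 2 (real (Nc U))))"
      unfolding c_def prod_half p by (simp add: field_simps)
  qed
  also have "\<dots> \<le> (\<Sum>U\<in>Pow {..<n}. (c U / 2 ^ n) * (\<Sum>w\<in>D.CS. real (cntB U (bet G) w) * L w))"
  proof (rule sum_mono)
    fix U assume "U \<in> Pow {..<n}"
    hence U: "U \<subseteq> {..<n}" by simp
    show "(c U / 2 ^ n) * (2 ^ (n - card U) * (log 2 (real (card C)) - log 2 (real (Nc U)))) \<le>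
          (c U / 2 ^ n) * (\<Sum>w\<in>D.CS. real (cntB U (bet G) w) * L w)"
      using per_U[OF G U] c0[of U] unfolding L_def T_def by (intro mult_left_mono) auto
  qed
  finally show ?thesis using I by simp
qed

end


definition FF :: "nat set \<Rightarrow> (nat set \<Rightarrow> real) \<Rightarrow> real \<Rightarrow> real" where
  "FF S L d = (\<Sum>E\<in>Pow S. d ^ card E * (1 - d) ^ (card S - card E) * L E)"

lemma FF_insert:
  assumes fS: "finite S" and a: "a \<notin> S"
  shows "FF (insert a S) L d = (1 - d) * FF S L d + d * FF S (\<lambda>E. L (insert a E)) d"
proof -
  have disj: "Pow S \<inter> insert a ` Pow S = {}" using a by auto
  have inj: "inj_on (insert a) (Pow S)" using a by (intro inj_on_inverseI[where g="\<lambda>E. E - {a}"]) auto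
  have cS: "card (insert a S) = Suc (card S)" using fS a by simp
  have "FF (insert a S) L d = (\<Sum>E\<in>Pow S. d ^ card E * (1 - d) ^ (card (insert a S) - card E) * L E) +
      (\<Sum>E\<in>insert a ` Pow S. d ^ card E * (1 - d) ^ (card (insert a S) - card E) * L E)"
    unfolding FF_def Pow_insert by (rule sum.union_disjoint) (use fS disj in auto)
  also have "(\<Sum>E\<in>insert a ` Pow S. d ^ card E * (1 - d) ^ (card (insert a S) - card E) * L E) =
      (\<Sum>E\<in>Pow S. d ^ card (insert a E) * (1 - d) ^ (card (insert a S) - card (insert a E)) * L (insert a E))"
    by (rule sum.reindex[OF inj, unfolded comp_def])
  also have "\<dots> = d * FF S (\<lambda>E. L (insert a E)) d"
    unfolding FF_def sum_distrib_left
  proof (rule sum.cong[OF refl])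
    fix E assume "E \<in> Pow S"
    hence E: "E \<subseteq> S" by simp
    hence "finite E" "a \<notin> E" "card E \<le> card S" using fS a finite_subset card_mono by auto
    thus "d ^ card (insert a E) * (1 - d) ^ (card (insert a S) - card (insert a E)) * L (insert a E) =
       d * (d ^ card E * (1 - d) ^ (card S - card E) * L (insert a E))"
      using cS by simp
  qed
  also have "(\<Sum>E\<in>Pow S. d ^ card E * (1 - d) ^ (card (insert a S) - card E) * L E) = (1 - d) * FF S L d"
    unfolding FF_def sum_distrib_left
  proof (rule sum.cong[OF refl])
    fix E assume "E \<in> Pow S"
    hence E: "E \<subseteq> S" by simp
    hence "card E \<le> card S" using fS card_mono by auto
    hence "card (insert a S) - card E = Suc (card S - card E)" using cS by simp
    thus "d ^ card E * (1 - d) ^ (card (insert a S) - card E) * L E =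
       (1 - d) * (d ^ card E * (1 - d) ^ (card S - card E) * L E)" by simp
  qed
  finally show ?thesis by simp
qed

lemma FF_one: "finite S \<Longrightarrow> FF S (\<lambda>_. 1) d = 1"
proof (induction S rule: finite_induct)
  case empty show ?case unfolding FF_def by simp
next
  case (insert a S) thus ?case using FF_insert[OF insert(1,2), of "\<lambda>_. 1" d] by simp
qed

lemma FF_bound:
  assumes fS: "finite S" and d: "0 \<le> d" "d \<le> 1" and L: "\<And>E. E \<subseteq> S \<Longrightarrow> 0 \<le> L E \<and> L E \<le> c"
  shows "0 \<le> FF S L d \<and> FF S L d \<le> c"
proof -
  have w: "0 \<le> d ^ card E * (1 - d) ^ (card S - card E)" for E using d by simp
  have "FF S L d \<ge> 0" unfolding FF_def by (intro sum_nonneg mult_nonneg_nonneg) (use L d in auto)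
  moreover have "FF S L d \<le> FF S (\<lambda>_. c) d"
    unfolding FF_def using L w by (intro sum_mono mult_left_mono) auto
  moreover have "FF S (\<lambda>_. c) d = c * FF S (\<lambda>_. 1) d" unfolding FF_def by (simp add: sum_distrib_left ac_simps)
  ultimately show ?thesis using FF_one[OF fS] by simp
qed

lemma FF_diff: "FF S (\<lambda>E. L1 E - L2 E) d = FF S L1 d - FF S L2 d"
  unfolding FF_def by (simp add: sum_subtractf[symmetric] right_diff_distrib)

lemma FF_lip:
  assumes "finite S"
  shows "(\<forall>E a. E \<subseteq> S \<longrightarrow> a \<in> S \<longrightarrow> a \<notin> E \<longrightarrow> L E \<le> L (insert a E) \<and> L (insert a E) \<le> L E + 1) \<Longrightarrow>
    0 \<le> (d::real) \<Longrightarrow> d \<le> d' \<Longrightarrow> d' \<le> 1 \<Longrightarrow>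
    FF S L d \<le> FF S L d' \<and> FF S L d' \<le> FF S L d + real (card S) * (d' - d)"
  using assms
proof (induction S arbitrary: L rule: finite_induct)
  case empty thus ?case unfolding FF_def by simp
next
  case (insert a S)
  define L' where "L' = (\<lambda>E. L (insert a E))"
  have hL: "\<forall>E b. E \<subseteq> S \<longrightarrow> b \<in> S \<longrightarrow> b \<notin> E \<longrightarrow> L E \<le> L (insert b E) \<and> L (insert b E) \<le> L E + 1"
    using insert.prems(1) by blast
  have hL': "\<forall>E b. E \<subseteq> S \<longrightarrow> b \<in> S \<longrightarrow> b \<notin> E \<longrightarrow> L' E \<le> L' (insert b E) \<and> L' (insert b E) \<le> L' E + 1"
  proof (intro allI impI)
    fix E b assume "E \<subseteq> S" "b \<in> S" "b \<notin> E"
    hence "insert a E \<subseteq> insert a S" "b \<in> insert a S" "b \<notin> insert a E" using insert.hyps(2) by auto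
    thus "L' E \<le> L' (insert b E) \<and> L' (insert b E) \<le> L' E + 1"
      using insert.prems(1) unfolding L'_def by (metis insert_commute)
  qed
  have IA: "FF S L d \<le> FF S L d' \<and> FF S L d' \<le> FF S L d + real (card S) * (d' - d)"
    using insert.IH[OF hL] insert.prems by simp
  have IB: "FF S L' d \<le> FF S L' d' \<and> FF S L' d' \<le> FF S L' d + real (card S) * (d' - d)"
    using insert.IH[OF hL'] insert.prems by simp
  have BA: "0 \<le> FF S L' d' - FF S L d' \<and> FF S L' d' - FF S L d' \<le> 1"
  proof -
    have b: "0 \<le> L' E - L E \<and> L' E - L E \<le> 1" if "E \<subseteq> S" for E
    proof -
      have h: "E \<subseteq> insert a S" "a \<in> insert a S" "a \<notin> E" using that insert.hyps(2) by auto
      hence "L E \<le> L (insert a E) \<and> L (insert a E) \<le> L E + 1" using insert.prems(1) by blast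
      thus ?thesis unfolding L'_def by linarith
    qed
    have d'01: "0 \<le> d'" "d' \<le> 1" using insert.prems by auto
    have "0 \<le> FF S (\<lambda>E. L' E - L E) d' \<and> FF S (\<lambda>E. L' E - L E) d' \<le> 1"
      using FF_bound[where L="\<lambda>E. L' E - L E" and c=1, OF insert.hyps(1) d'01 b] by simp
    thus ?thesis by (simp add: FF_diff)
  qed
  define A where "A = FF S L d" define A' where "A' = FF S L d'"
  define B where "B = FF S L' d" define B' where "B' = FF S L' d'"
  have eq: "FF (insert a S) L d' - FF (insert a S) L d = (1 - d) * (A' - A) + d * (B' - B) + (d' - d) * (B' - A')"
    unfolding FF_insert[OF insert.hyps] A_def A'_def B_def B'_def L'_def by (simp add: algebra_simps)
  have dd: "0 \<le> d" "d \<le> 1" "0 \<le> d' - d" using insert.prems by auto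
  have s: "card (insert a S) = card S + 1" using insert.hyps by simp
  have t1: "0 \<le> (1 - d) * (A' - A)" "(1 - d) * (A' - A) \<le> (1 - d) * (real (card S) * (d' - d))"
    using IA dd unfolding A_def A'_def by (auto intro: mult_left_mono)
  have t2: "0 \<le> d * (B' - B)" "d * (B' - B) \<le> d * (real (card S) * (d' - d))"
    using IB dd unfolding B_def B'_def by (auto intro: mult_left_mono)
  have t3: "0 \<le> (d' - d) * (B' - A')" "(d' - d) * (B' - A') \<le> (d' - d)"
    using BA dd unfolding B'_def A'_def by (auto intro: mult_left_le)
  have "(1 - d) * (real (card S) * (d' - d)) + d * (real (card S) * (d' - d)) = real (card S) * (d' - d)"
    by (simp add: algebra_simps)
  moreover have "real (card (insert a S)) * (d' - d) = real (card S) * (d' - d) + (d' - d)"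
    using s by (simp add: algebra_simps)
  ultimately have "FF (insert a S) L d \<le> FF (insert a S) L d' \<and>
     FF (insert a S) L d' \<le> FF (insert a S) L d + real (card (insert a S)) * (d' - d)"
    using eq t1 t2 t3 by linarith
  thus ?case .
qed


lemma FF_mono_L:
  assumes "finite S" "0 \<le> d" "d \<le> 1" "\<And>E. E \<subseteq> S \<Longrightarrow> L1 E \<le> L2 E"
  shows "FF S L1 d \<le> FF S L2 d"
proof -
  have w: "0 \<le> d ^ card E * (1 - d) ^ (card S - card E)" for E using assms by simp
  show ?thesis unfolding FF_def by (rule sum_mono) (use w assms(4) in \<open>auto intro: mult_left_mono\<close>)
qed

lemma FF_const: "FF S (\<lambda>E. c - L E) d = c * FF S (\<lambda>_. 1) d - FF S L d"
  unfolding FF_def by (simp add: sum_subtractf[symmetric] sum_distrib_left algebra_simps)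

context ccode begin

definition LL :: "nat set \<Rightarrow> real" where "LL E = log 2 (real (Nc E))"

lemma LL_nonneg: "LL E \<ge> 0" unfolding LL_def using Nc_pos[of E] by simp

lemma LL_inc: "LL E \<le> LL (insert a E) \<and> LL (insert a E) \<le> LL E + 1"
proof -
  have p: "real (Nc E) > 0" using Nc_pos[of E] by simp
  have m: "real (Nc E) \<le> real (Nc (insert a E))" using Nc_mono[of E "insert a E"] by auto
  have u: "real (Nc (insert a E)) \<le> 2 * real (Nc E)" using Nc_insert[of a E] by simp
  have "LL E \<le> LL (insert a E)" unfolding LL_def using p m by simp
  moreover have "LL (insert a E) \<le> log 2 (2 * real (Nc E))" unfolding LL_def using p u m
    by (subst log_le_cancel_iff) auto
  moreover have "log 2 (2 * real (Nc E)) = 1 + LL E" unfolding LL_def using p by (simp add: log_mult)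
  ultimately show ?thesis by simp
qed

abbreviation "H d \<equiv> FF {..<n} LL d"

lemma H_lip: "0 \<le> d \<Longrightarrow> d \<le> d' \<Longrightarrow> d' \<le> 1 \<Longrightarrow> H d \<le> H d' \<and> H d' \<le> H d + real n * (d' - d)"
  using FF_lip[of "{..<n}" LL d d'] LL_inc by simp

lemma H_nonneg: "0 \<le> d \<Longrightarrow> d \<le> 1 \<Longrightarrow> H d \<ge> 0"
  using FF_mono_L[of "{..<n}" d "\<lambda>_. 0" LL] LL_nonneg by (simp add: FF_def)

lemma bec_eq: "bec_word_error n C d = FF {..<n} (\<lambda>E. 1 - 1 / real (Nc E)) d"
proof -
  have "(1 / real (card C)) * (\<Sum>x\<in>C. (1 - 1 / real (card {c\<in>C. \<forall>i<n. i \<notin> E \<longrightarrow> c i = x i})))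
     = 1 - 1 / real (Nc E)" for E
  proof -
    have "(\<Sum>x\<in>C. (1 - 1 / real (card {c\<in>C. \<forall>i<n. i \<notin> E \<longrightarrow> c i = x i}))) =
          (\<Sum>x\<in>C. (1 - 1 / real (Nc E)))" by (rule sum.cong) (simp_all add: consistent_card)
    thus ?thesis using cardC_pos by simp
  qed
  thus ?thesis unfolding bec_word_error_def FF_def by simp
qed

lemma card_C_le: "real (card C) \<le> 2 ^ n"
proof -
  have "card C \<le> card (vecs n)" using C.L_sub C.fin_vecs by (rule card_mono[rotated])
  thus ?thesis using C.card_vecs by (metis of_nat_le_iff of_nat_numeral of_nat_power)
qed

lemma LL_le_n: "LL E \<le> real n"
proof -
  have "real (Nc E) \<le> 2 ^ n" using Nc_le[of E] card_C_le by linarith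
  hence "LL E \<le> log 2 (2 ^ n)" unfolding LL_def using Nc_pos[of E]
    by (subst log_le_cancel_iff) auto
  thus ?thesis by simp
qed

lemma H_le_bec: "0 \<le> d \<Longrightarrow> d \<le> 1 \<Longrightarrow> H d \<le> 2 * real n * bec_word_error n C d"
proof -
  assume d: "0 \<le> d" "d \<le> 1"
  have pt: "LL E \<le> 2 * real n * (1 - 1 / real (Nc E))" for E
  proof (cases "Nc E = 1")
    case True thus ?thesis unfolding LL_def by simp
  next
    case False
    hence "real (Nc E) \<ge> 2" using Nc_pos[of E] by linarith
    hence "1 - 1 / real (Nc E) \<ge> 1 / 2" by (simp add: field_simps)
    hence "(1 / 2) * (2 * real n) \<le> (1 - 1 / real (Nc E)) * (2 * real n)"
      by (intro mult_right_mono) auto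
    hence "real n \<le> 2 * real n * (1 - 1 / real (Nc E))" by (simp add: ac_simps)
    thus ?thesis using LL_le_n[of E] by linarith
  qed
  have "H d \<le> FF {..<n} (\<lambda>E. 2 * real n * (1 - 1 / real (Nc E))) d"
    by (rule FF_mono_L) (use d pt in auto)
  also have "\<dots> = 2 * real n * bec_word_error n C d"
    unfolding bec_eq FF_def by (simp add: sum_distrib_left algebra_simps)
  finally show ?thesis .
qed

end


lemma g_nd: "g_awgn lam True t = normal_density (sqrt (2 * lam)) 1 t"
  "g_awgn lam False t = normal_density (- sqrt (2 * lam)) 1 t"
  unfolding g_awgn_def normal_density_def by simp_all

lemma g_meas[measurable]: "g_awgn lam b \<in> borel_measurable borel"
  by (cases b) (simp_all add: g_nd[abs_def])

lemma g_pos: "g_awgn lam b t > 0"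
  unfolding g_awgn_def by simp

lemma g_int: "integrable lborel (g_awgn lam b)"
  by (cases b) (simp_all add: g_nd[abs_def])

lemma g_int1: "(\<integral>t. g_awgn lam b t \<partial>lborel) = 1"
  by (cases b) (simp_all add: g_nd[abs_def])

definition mu1 :: "real \<Rightarrow> real \<Rightarrow> real" where
  "mu1 lam t = min (g_awgn lam False t) (g_awgn lam True t)"
definition del1 :: "real \<Rightarrow> real \<Rightarrow> real" where
  "del1 lam t = \<bar>g_awgn lam False t - g_awgn lam True t\<bar>"

lemma mu1_meas[measurable]: "mu1 lam \<in> borel_measurable borel"
  unfolding mu1_def[abs_def] by measurable
lemma del1_meas[measurable]: "del1 lam \<in> borel_measurable borel"
  unfolding del1_def[abs_def] by measurable

lemma mu1_int: "integrable lborel (mu1 lam)"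
  by (rule Bochner_Integration.integrable_bound[OF g_int[of lam False]]) (auto simp: mu1_def g_pos less_imp_le)

lemma del1_int: "integrable lborel (del1 lam)"
proof -
  have "integrable lborel (\<lambda>t. g_awgn lam False t + g_awgn lam True t)"
    by (intro Bochner_Integration.integrable_add g_int)
  thus ?thesis
  proof (rule Bochner_Integration.integrable_bound)
    show "AE x in lborel. norm (del1 lam x) \<le> norm (g_awgn lam False x + g_awgn lam True x)"
    proof (rule AE_I2)
      fix x
      have "0 < g_awgn lam False x" "0 < g_awgn lam True x" by (rule g_pos)+
      thus "norm (del1 lam x) \<le> norm (g_awgn lam False x + g_awgn lam True x)"
        unfolding del1_def by simp
    qed
  qed simp
qed

lemma half_sum: "(\<integral>t. del1 lam t / 2 \<partial>lborel) + (\<integral>t. mu1 lam t \<partial>lborel) = 1"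
proof -
  have "(\<integral>t. del1 lam t / 2 \<partial>lborel) + (\<integral>t. mu1 lam t \<partial>lborel) =
     (\<integral>t. del1 lam t / 2 + mu1 lam t \<partial>lborel)"
    using del1_int mu1_int by (simp add: integral_add)
  also have "\<dots> = (\<integral>t. (g_awgn lam False t + g_awgn lam True t) / 2 \<partial>lborel)"
    by (rule Bochner_Integration.integral_cong) (auto simp: del1_def mu1_def)
  also have "\<dots> = 1" using g_int g_int1 by (simp add: integral_add)
  finally show ?thesis .
qed


definition sdx :: "real \<Rightarrow> real" where "sdx z = exp (- z\<^sup>2 / 2) / sqrt (2 * pi)"

lemma sdx_int: "integrable lborel sdx"
proof -
  have "sdx = std_normal_density" unfolding sdx_def[abs_def] std_normal_density_def by auto
  moreover have "integrable lborel (normal_density 0 1)" by (rule integrable_normal_density) simp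
  ultimately show ?thesis by simp
qed

lemma Q_eq: "Qfun x = (\<integral>z. sdx z * indicator {x..} z \<partial>lborel)"
  unfolding Qfun_def sdx_def by (simp add: mult.commute)

lemma g_sdx: "g_awgn lam True t = sdx (t - sqrt (2 * lam))" "g_awgn lam False t = sdx (t + sqrt (2 * lam))"
  unfolding g_awgn_def sdx_def by simp_all

lemma sd_even: "sdx (- y) = sdx y"
  unfolding sdx_def by simp

lemma mu1_split:
  assumes lam: "lam > 0"
  shows "mu1 lam t = g_awgn lam False t * indicator {0..} t + g_awgn lam True t * indicator {..<0} t"
proof -
  define s where "s = sqrt (2 * lam)"
  have s0: "s \<ge> 0" unfolding s_def using lam by simp
  have e0: "g_awgn lam False t = exp (- (t + s)\<^sup>2 / 2) / sqrt (2 * pi)"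
    and e1: "g_awgn lam True t = exp (- (t - s)\<^sup>2 / 2) / sqrt (2 * pi)"
    unfolding g_awgn_def s_def by simp_all
  show ?thesis
  proof (cases "t \<ge> 0")
    case True
    hence "(t - s)\<^sup>2 \<le> (t + s)\<^sup>2" using s0 by (simp add: power2_eq_square algebra_simps)
    hence "g_awgn lam False t \<le> g_awgn lam True t" unfolding e0 e1
      by (intro divide_right_mono) auto
    thus ?thesis using True unfolding mu1_def by (simp add: indicator_def)
  next
    case False
    hence "(t + s)\<^sup>2 \<le> (t - s)\<^sup>2" using s0 mult_nonneg_nonpos[of s t] by (simp add: power2_eq_square algebra_simps)
    hence "g_awgn lam True t \<le> g_awgn lam False t" unfolding e0 e1
      by (intro divide_right_mono) auto
    thus ?thesis using False unfolding mu1_def by (simp add: indicator_def)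
  qed
qed

lemma eps_eq:
  assumes lam: "lam > 0"
  shows "(\<integral>t. mu1 lam t \<partial>lborel) = 2 * Qfun (sqrt (2 * lam))"
proof -
  define s where "s = sqrt (2 * lam)"
  define f where "f = (\<lambda>u. sdx u * indicator {s..} u)"
  have i1: "integrable lborel (\<lambda>t. g_awgn lam False t * indicator {0..} t)"
    by (rule integrable_real_mult_indicator) (auto simp: g_int)
  have i2: "integrable lborel (\<lambda>t. g_awgn lam True t * indicator {..<0} t)"
    by (rule integrable_real_mult_indicator) (auto simp: g_int)
  have Q: "Qfun s = integral\<^sup>L lborel f" unfolding f_def Q_eq ..
  have I1: "(\<integral>t. g_awgn lam False t * indicator {0..} t \<partial>lborel) = Qfun s"
  proof -
    have "integral\<^sup>L lborel f = (\<integral>x. f (s + 1 * x) \<partial>lborel)"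
      using lborel_integral_real_affine[of 1 f s] by simp
    also have "\<dots> = (\<integral>t. g_awgn lam False t * indicator {0..} t \<partial>lborel)"
    proof (rule Bochner_Integration.integral_cong[OF refl])
      fix x
      have "sdx (s + x) = sdx (x + s)" by (metis add.commute)
      thus "f (s + 1 * x) = g_awgn lam False x * indicator {0..} x"
        by (simp add: f_def g_sdx s_def[symmetric] indicator_def)
    qed
    finally show ?thesis using Q by simp
  qed
  have I2: "(\<integral>t. g_awgn lam True t * indicator {..<0} t \<partial>lborel) = Qfun s"
  proof -
    have "integral\<^sup>L lborel f = (\<integral>x. f (s + (-1) * x) \<partial>lborel)"
      using lborel_integral_real_affine[of "-1" f s] by simp
    also have "\<dots> = (\<integral>t. g_awgn lam True t * indicator {..0} t \<partial>lborel)"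
    proof (rule Bochner_Integration.integral_cong[OF refl])
      fix x
      have "sdx (s - x) = sdx (x - s)"
        using sd_even[of "x - s"] by simp
      thus "f (s + (-1) * x) = g_awgn lam True x * indicator {..0} x"
        by (auto simp: f_def g_sdx s_def indicator_def)
    qed
    also have "\<dots> = (\<integral>t. g_awgn lam True t * indicator {..<0} t \<partial>lborel)"
    proof (rule integral_cong_AE)
      show "AE x in lborel. g_awgn lam True x * indicator {..0} x = g_awgn lam True x * indicator {..<0} x"
        using AE_lborel_singleton[of 0] by eventually_elim (auto simp: indicator_def)
    qed auto
    finally show ?thesis using Q by simp
  qed
  have "(\<integral>t. mu1 lam t \<partial>lborel) =
      (\<integral>t. g_awgn lam False t * indicator {0..} t + g_awgn lam True t * indicator {..<0} t \<partial>lborel)"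
    using mu1_split[OF lam] by simp
  also have "\<dots> = Qfun s + Qfun s" using i1 i2 I1 I2 by (simp add: integral_add)
  finally show ?thesis unfolding s_def by simp
qed


interpretation lbp: product_sigma_finite "\<lambda>_::nat. lborel :: real measure" by standard

lemma int_prod_split:
  fixes F1 F2 :: "real \<Rightarrow> real" and n :: nat
  assumes U: "U \<subseteq> {..<n}"
  shows "(\<lambda>z. (\<Prod>i\<in>U. F1 (z i)) * (\<Prod>i\<in>{..<n}-U. F2 (z i))) =
         (\<lambda>z. \<Prod>i\<in>{..<n}. (if i \<in> U then F1 else F2) (z i))"
proof
  fix z :: "nat \<Rightarrow> real"
  have "(\<Prod>i\<in>{..<n}. (if i \<in> U then F1 else F2) (z i)) =
     (\<Prod>i\<in>U. (if i \<in> U then F1 else F2) (z i)) * (\<Prod>i\<in>{..<n}-U. (if i \<in> U then F1 else F2) (z i))"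
    using prod.subset_diff[of U "{..<n}" "\<lambda>i. (if i \<in> U then F1 else F2) (z i)"] U by (simp add: mult.commute)
  thus "(\<Prod>i\<in>U. F1 (z i)) * (\<Prod>i\<in>{..<n}-U. F2 (z i)) = (\<Prod>i\<in>{..<n}. (if i \<in> U then F1 else F2) (z i))"
    by simp
qed

lemma int_prodU:
  fixes F1 F2 :: "real \<Rightarrow> real" and n :: nat
  assumes U: "U \<subseteq> {..<n}" and i1: "integrable lborel F1" and i2: "integrable lborel F2"
  shows "integrable (out_space n) (\<lambda>z. (\<Prod>i\<in>U. F1 (z i)) * (\<Prod>i\<in>{..<n}-U. F2 (z i)))"
    "(\<integral>z. (\<Prod>i\<in>U. F1 (z i)) * (\<Prod>i\<in>{..<n}-U. F2 (z i)) \<partial>out_space n) =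
       (integral\<^sup>L lborel F1) ^ card U * (integral\<^sup>L lborel F2) ^ (n - card U)"
proof -
  have ii: "\<And>i. i \<in> {..<n} \<Longrightarrow> integrable lborel (if i \<in> U then F1 else F2)" using i1 i2 by simp
  show "integrable (out_space n) (\<lambda>z. (\<Prod>i\<in>U. F1 (z i)) * (\<Prod>i\<in>{..<n}-U. F2 (z i)))"
    unfolding int_prod_split[OF U] out_space_def
    by (rule lbp.product_integrable_prod) (use ii in auto)
  have "(\<integral>z. (\<Prod>i\<in>U. F1 (z i)) * (\<Prod>i\<in>{..<n}-U. F2 (z i)) \<partial>out_space n) =
      (\<Prod>i\<in>{..<n}. integral\<^sup>L lborel (if i \<in> U then F1 else F2))"
    unfolding int_prod_split[OF U] out_space_def
    by (rule lbp.product_integral_prod) (use ii in auto)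
  also have "\<dots> = (\<Prod>i\<in>U. integral\<^sup>L lborel F1) * (\<Prod>i\<in>{..<n}-U. integral\<^sup>L lborel F2)"
    using prod.subset_diff[of U "{..<n}" "\<lambda>i. integral\<^sup>L lborel (if i \<in> U then F1 else F2)"] U
    by (simp add: mult.commute)
  also have "\<dots> = (integral\<^sup>L lborel F1) ^ card U * (integral\<^sup>L lborel F2) ^ (n - card U)"
    using U by (simp add: card_Diff_subset finite_subset)
  finally show "(\<integral>z. (\<Prod>i\<in>U. F1 (z i)) * (\<Prod>i\<in>{..<n}-U. F2 (z i)) \<partial>out_space n) =
       (integral\<^sup>L lborel F1) ^ card U * (integral\<^sup>L lborel F2) ^ (n - card U)" .
qed

lemma m_int: "integrable lborel (\<lambda>t. (g_awgn lam False t + g_awgn lam True t) / 2)"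
  by (intro integrable_divide Bochner_Integration.integrable_add g_int)

lemma m_int1: "(\<integral>t. (g_awgn lam False t + g_awgn lam True t) / 2 \<partial>lborel) = 1"
  using g_int g_int1 by (simp add: integral_add)

lemma UB_int:
  "integrable (out_space n) (\<lambda>z. \<Prod>i<n. (g_awgn lam False (z i) + g_awgn lam True (z i)) / 2)"
  "(\<integral>z. (\<Prod>i<n. (g_awgn lam False (z i) + g_awgn lam True (z i)) / 2) \<partial>out_space n) = 1"
proof -
  show "integrable (out_space n) (\<lambda>z. \<Prod>i<n. (g_awgn lam False (z i) + g_awgn lam True (z i)) / 2)"
    unfolding out_space_def
    using lbp.product_integrable_prod[of "{..<n}" "\<lambda>_ t. (g_awgn lam False t + g_awgn lam True t) / 2"] m_int
    by simp
  show "(\<integral>z. (\<Prod>i<n. (g_awgn lam False (z i) + g_awgn lam True (z i)) / 2) \<partial>out_space n) = 1"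
    unfolding out_space_def
    using lbp.product_integral_prod[of "{..<n}" "\<lambda>_ t. (g_awgn lam False t + g_awgn lam True t) / 2"] m_int m_int1
    by simp
qed


context ccode begin

lemma eqv_int: "equivocation lam n (vecs n) D =
  (\<integral>z. integrand (\<lambda>i b. g_awgn lam b (z i)) \<partial>out_space n)"
  unfolding equivocation_def integrand_def msg_density_def word_density_def Let_def ..

lemma integrand_meas: "(\<lambda>z. integrand (\<lambda>i b. g_awgn lam b (z i))) \<in> borel_measurable (out_space n)"
  unfolding integrand_def Let_def out_space_def by measurable

lemma mu_Gz: "mu (\<lambda>i b. g_awgn lam b (z i)) i = mu1 lam (z i)"
  unfolding mu_def mu1_def ..
lemma del_Gz: "del (\<lambda>i b. g_awgn lam b (z i)) i = del1 lam (z i)"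
  unfolding del_def del1_def ..

lemma LL_le_k: "LL U \<le> log 2 (real (card C))"
  unfolding LL_def using Nc_pos[of U] Nc_le[of U] by simp

lemma equiv_bounds:
  fixes lam :: real
  defines "\<alpha> \<equiv> (\<integral>t. del1 lam t / 2 \<partial>lborel)"
  shows "log 2 (real (card C)) - H \<alpha> \<le> equivocation lam n (vecs n) D"
    "equivocation lam n (vecs n) D \<le> log 2 (real (card C))"
proof -
  define k where "k = log 2 (real (card C))"
  define \<epsilon> where "\<epsilon> = (\<integral>t. mu1 lam t \<partial>lborel)"
  have ae: "\<alpha> + \<epsilon> = 1" unfolding \<alpha>_def \<epsilon>_def by (rule half_sum)
  define I where "I = (\<lambda>z. integrand (\<lambda>i b. g_awgn lam b (z i)))"
  define LBf where "LBf = (\<lambda>z. \<Sum>U\<in>Pow {..<n}. ((\<Prod>i\<in>U. del1 lam (z i) / 2) * (\<Prod>i\<in>{..<n}-U. mu1 lam (z i))) * (k - LL U))"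
  define UBf where "UBf = (\<lambda>z. (\<Prod>i<n. (g_awgn lam False (z i) + g_awgn lam True (z i)) / 2) * k)"
  have LB: "LBf z \<le> I z" for z
    using integrand_LB[of "\<lambda>i b. g_awgn lam b (z i)"] unfolding LBf_def I_def k_def LL_def mu_Gz del_Gz
    by (simp add: g_pos)
  have UB: "I z \<le> UBf z" for z
    using integrand_UB[of "\<lambda>i b. g_awgn lam b (z i)"] unfolding UBf_def I_def k_def
    by (simp add: g_pos)
  have LB0: "0 \<le> LBf z" for z
    unfolding LBf_def using LL_le_k unfolding k_def
    by (intro sum_nonneg mult_nonneg_nonneg prod_nonneg)
       (auto simp: del1_def mu1_def g_pos less_imp_le)
  have del2_int: "integrable lborel (\<lambda>t. del1 lam t / 2)" by (intro integrable_divide del1_int)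
  have LBi: "integrable (out_space n) LBf"
    unfolding LBf_def
    by (intro Bochner_Integration.integrable_sum integrable_mult_left int_prodU(1) del2_int mu1_int) auto
  have UBi: "integrable (out_space n) UBf"
    unfolding UBf_def by (intro integrable_mult_left UB_int(1))
  have Ii: "integrable (out_space n) I"
  proof (rule Bochner_Integration.integrable_bound[OF UBi])
    show "I \<in> borel_measurable (out_space n)" unfolding I_def by (rule integrand_meas)
    show "AE x in out_space n. norm (I x) \<le> norm (UBf x)"
    proof (rule AE_I2)
      fix x show "norm (I x) \<le> norm (UBf x)" using LB[of x] LB0[of x] UB[of x] by simp
    qed
  qed
  have eq: "equivocation lam n (vecs n) D = integral\<^sup>L (out_space n) I" unfolding I_def eqv_int ..
  have "integral\<^sup>L (out_space n) LBf = (\<Sum>U\<in>Pow {..<n}. LINT z|out_space n. (\<Prod>i\<in>U. del1 lam (z i) / 2) * (\<Prod>i\<in>{..<n} - U. mu1 lam (z i)) * (k - LL U))"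
    unfolding LBf_def
    by (rule Bochner_Integration.integral_sum) (intro integrable_mult_left int_prodU(1) del2_int mu1_int, auto)
  also have "\<dots> = (\<Sum>U\<in>Pow {..<n}. \<alpha> ^ card U * \<epsilon> ^ (n - card U) * (k - LL U))"
  proof (rule sum.cong[OF refl])
    fix U assume "U \<in> Pow {..<n}"
    hence U: "U \<subseteq> {..<n}" by simp
    show "(LINT z|out_space n. (\<Prod>i\<in>U. del1 lam (z i) / 2) * (\<Prod>i\<in>{..<n} - U. mu1 lam (z i)) * (k - LL U)) =
      \<alpha> ^ card U * \<epsilon> ^ (n - card U) * (k - LL U)"
      using int_prodU(2)[OF U del2_int mu1_int] unfolding \<alpha>_def \<epsilon>_def by simp
  qed
  also have "\<dots> = FF {..<n} (\<lambda>U. k - LL U) \<alpha>"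
  proof -
    have e: "\<epsilon> = 1 - \<alpha>" using ae by simp
    show ?thesis unfolding FF_def e by (intro sum.cong) (auto simp: algebra_simps)
  qed
  also have "\<dots> = k - H \<alpha>" unfolding FF_const FF_one[OF finite_lessThan] by simp
  finally have iLB: "integral\<^sup>L (out_space n) LBf = k - H \<alpha>" .
  have iUB: "integral\<^sup>L (out_space n) UBf = k" unfolding UBf_def using UB_int(2) by simp
  show "k - H \<alpha> \<le> equivocation lam n (vecs n) D"
    unfolding eq iLB[symmetric] by (rule integral_mono[OF LBi Ii LB])
  show "equivocation lam n (vecs n) D \<le> k"
    unfolding eq iUB[symmetric] by (rule integral_mono[OF Ii UBi UB])
qed

end


lemma FF_zero: "finite S \<Longrightarrow> FF S L 0 = L {}"
proof -
  assume fS: "finite S"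
  have "FF S L 0 = (\<Sum>E\<in>Pow S. if E = {} then L {} else 0)"
    unfolding FF_def
  proof (rule sum.cong[OF refl])
    fix E assume "E \<in> Pow S"
    hence "finite E" using fS finite_subset by auto
    thus "0 ^ card E * (1 - 0) ^ (card S - card E) * L E = (if E = {} then L {} else 0)"
      by (cases "E = {}") auto
  qed
  also have "\<dots> = L {}" using fS by (simp add: sum.delta')
  finally show ?thesis .
qed

context ccode begin

lemma Nc_empty: "Nc {} = 1"
proof -
  have "Nset {} = {\<lambda>_. False}" unfolding Nset_def using C.L0 by auto
  thus ?thesis unfolding Nc_def by simp
qed

lemma bec_zero: "bec_word_error n C 0 = 0"
  unfolding bec_eq by (simp add: FF_zero Nc_empty)

lemma nested_eq: "nested_rate n (vecs n) D = code_rate n C"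
proof -
  have cd: "real (card D) * real (card C) = 2 ^ n"
    using dual_card[OF linC] by (metis of_nat_mult of_nat_numeral of_nat_power)
  have "log 2 (real (card D)) + log 2 (real (card C)) = log 2 (real (card D) * real (card C))"
    using cardD_pos cardC_pos by (simp add: log_mult)
  also have "\<dots> = real n" using cd by simp
  finally have "log 2 (real (card (vecs n))) = log 2 (real (card D)) + log 2 (real (card C))"
    using C.card_vecs by simp
  thus ?thesis unfolding nested_rate_def code_rate_def by (simp add: diff_divide_distrib[symmetric])
qed

end

theorem corollary2:
  fixes lam R :: real and C :: "nat \<Rightarrow> (nat \<Rightarrow> bool) set"
  assumes "lam > 0"
    and "0 < R" and "R < 1"
    and "R \<le> 2 * Qfun (sqrt (2 * lam))"
    and "\<And>n. linear_code n (C n)"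
    and "(\<lambda>n. code_rate n (C n)) \<longlonglongrightarrow> R"
    and "erasure_threshold C = 1 - R"
  shows "achievable_nested lam vecs (\<lambda>n. dual_code n (C n)) R R"
proof -
  note lam = assms(1)
  have cc: "ccode n (C n)" for n by (simp add: ccode_def assms(5))
  define \<alpha> where "\<alpha> = (\<integral>t. del1 lam t / 2 \<partial>lborel)"
  define \<epsilon> where "\<epsilon> = (\<integral>t. mu1 lam t \<partial>lborel)"
  have ae: "\<alpha> + \<epsilon> = 1" unfolding \<alpha>_def \<epsilon>_def by (rule half_sum)
  have eps: "\<epsilon> = 2 * Qfun (sqrt (2 * lam))" unfolding \<epsilon>_def by (rule eps_eq[OF lam])
  have a0: "\<alpha> \<ge> 0" unfolding \<alpha>_def by (rule integral_nonneg_AE) (auto simp: del1_def)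
  have e0: "\<epsilon> \<ge> 0" unfolding \<epsilon>_def by (rule integral_nonneg_AE) (auto simp: mu1_def g_pos less_imp_le)
  have a1: "\<alpha> \<le> 1" using ae e0 by simp
  have aR: "\<alpha> \<le> 1 - R" using ae eps assms(4) by simp
  define H where "H = (\<lambda>n. FF {..<n} (ccode.LL (C n)) \<alpha>)"
  define k where "k = (\<lambda>n. log 2 (real (card (C n))))"
  define e where "e = (\<lambda>n. equivocation lam n (vecs n) (dual_code n (C n)))"
  have lo: "k n - H n \<le> e n" for n
    using ccode.equiv_bounds(1)[OF cc[of n], of lam] unfolding k_def H_def e_def \<alpha>_def .
  have hi: "e n \<le> k n" for n
    using ccode.equiv_bounds(2)[OF cc[of n], of lam] unfolding k_def e_def .
  have kR: "(\<lambda>n. k n / real n) \<longlonglongrightarrow> R" using assms(6) unfolding k_def code_rate_def .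
  define S where "S = {d\<in>{0..1}. (\<lambda>n. bec_word_error n (C n) d) \<longlonglongrightarrow> 0}"
  have supS: "Sup S = 1 - R" using assms(7) unfolding erasure_threshold_def S_def .
  have S0: "0 \<in> S" unfolding S_def using ccode.bec_zero[OF cc] by simp
  have Sb: "bdd_above S" unfolding S_def bdd_above_def by auto
  have H0: "(\<lambda>n. H n / real n) \<longlonglongrightarrow> 0"
  proof (rule LIMSEQ_I)
    fix r :: real assume r: "0 < r"
    have "1 - R - r / 2 < Sup S" using supS r by simp
    then obtain d where d: "d \<in> S" "1 - R - r / 2 < d" using less_cSup_iff[of S] S0 Sb by blast
    have d01: "0 \<le> d" "d \<le> 1" and bl: "(\<lambda>n. bec_word_error n (C n) d) \<longlonglongrightarrow> 0"
      using d(1) unfolding S_def by auto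
    obtain no where no: "\<forall>n\<ge>no. norm (bec_word_error n (C n) d - 0) < r / 4"
      using LIMSEQ_D[OF bl, of "r / 4"] r by auto
    have "norm (H n / real n - 0) < r" if n: "n \<ge> Suc no" for n
    proof -
      have n0: "real n > 0" using n by simp
      have Hn0: "H n \<ge> 0" unfolding H_def using ccode.H_nonneg[OF cc a0 a1] .
      have Hd: "FF {..<n} (ccode.LL (C n)) d \<le> 2 * real n * bec_word_error n (C n) d"
        using ccode.H_le_bec[OF cc d01] .
      have Hlip: "H n \<le> FF {..<n} (ccode.LL (C n)) d + real n * (r / 2)"
      proof (cases "\<alpha> \<le> d")
        case True
        hence "H n \<le> FF {..<n} (ccode.LL (C n)) d"
          unfolding H_def using ccode.H_lip[OF cc a0 True d01(2)] by simp
        moreover have "FF {..<n} (ccode.LL (C n)) d \<ge> 0" using ccode.H_nonneg[OF cc d01] .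
        moreover have "real n * (r / 2) \<ge> 0" using n0 r by simp
        ultimately show ?thesis by linarith
      next
        case False
        hence "H n \<le> FF {..<n} (ccode.LL (C n)) d + real n * (\<alpha> - d)"
          unfolding H_def using ccode.H_lip[OF cc d01(1) _ a1] by simp
        moreover have "real n * (\<alpha> - d) \<le> real n * (r / 2)"
          using aR d(2) n0 by (intro mult_left_mono) auto
        ultimately show ?thesis by simp
      qed
      have "norm (bec_word_error n (C n) d - 0) < r / 4" using no n by simp
      hence bn: "bec_word_error n (C n) d < r / 4" by simp
      have "H n \<le> real n * (2 * bec_word_error n (C n) d + r / 2)"
        using Hlip Hd by (simp add: algebra_simps)
      also have "\<dots> < real n * r" using bn n0 by (intro mult_strict_left_mono) auto
      finally have "H n / real n < r" using n0 by (simp add: field_simps)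
      thus ?thesis using Hn0 n0 by simp
    qed
    thus "\<exists>no. \<forall>n\<ge>no. norm (H n / real n - 0) < r" by blast
  qed
  have eR: "(\<lambda>n. e n / real n) \<longlonglongrightarrow> R"
  proof (rule tendsto_sandwich)
    show "\<forall>\<^sub>F n in sequentially. k n / real n - H n / real n \<le> e n / real n"
      using lo by (intro always_eventually allI) (simp add: diff_divide_distrib[symmetric] divide_right_mono)
    show "\<forall>\<^sub>F n in sequentially. e n / real n \<le> k n / real n"
      using hi by (intro always_eventually allI) (simp add: divide_right_mono)
    show "(\<lambda>n. k n / real n - H n / real n) \<longlonglongrightarrow> R"
      using tendsto_diff[OF kR H0] by simp
    show "(\<lambda>n. k n / real n) \<longlonglongrightarrow> R" by (rule kR)
  qed
  have nr: "(\<lambda>n. nested_rate n (vecs n) (dual_code n (C n))) \<longlonglongrightarrow> R"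
    using assms(6) ccode.nested_eq[OF cc] by simp
  have le: "(\<lambda>n. legit_error (vecs n) (dual_code n (C n))) \<longlonglongrightarrow> 0"
  proof -
    have "legit_error (vecs n) (dual_code n (C n)) = 0" for n
      using lcode.legit_zero[of n "dual_code n (C n)"] dual_linear by (simp add: lcode_def)
    thus ?thesis by simp
  qed
  have cv: "convergent (\<lambda>n. e n / real n)" using eR unfolding convergent_def by blast
  have li: "lim (\<lambda>n. e n / real n) = R" using eR by (rule limI)
  show ?thesis
    unfolding achievable_nested_def
    using nr le cv[unfolded e_def] li[unfolded e_def] by simp
qed


end
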